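(* Let $1<p<3$ and $r=\min(1+1/p,3/p)$. Let $\alpha=(\alpha^+,0,\dots,0)\in[0,\infty)^n$ with $\alpha^+\in(0,\infty)^l$, $A=\Lambda_\alpha$, and let $\Gamma_0$ be a circle in $\mathbb{C}$ enclosing $0$ but no entry of $\alpha^+$. For Hermitian $\tilde E$ (small enough that $\Lambda_\alpha+\tilde E$ has no eigenvalue on $\Gamma_0$) let $P_0(\tilde E)=\frac{1}{2\pi i}\int_{\Gamma_0}(zI-(\Lambda_\alpha+\tilde E))^{-1}\,dz$. Let $Z$ be Hermitian positive semi-definite with $\operatorname{Ran} Z\subseteq \operatorname{Ker} A$, and let $b>0$ be an upper bound for both $\|\tilde E\|$ and $\|Z\|$. Then $$\big(P_0(\tilde E)ZP_0(\tilde E)\big)^{1/p}-Z^{1/p}=O(b^r),$$ where the size of the error is locally independent of $\alpha^+$ (the implicit constant and the range of small $b$ can be chosen uniformly for $\alpha^+$ in a neighborhood of the given one).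
   Context: $\Lambda_v$ denotes the diagonal matrix with the vector $v$ on its diagonal. Powers of Hermitian positive semi-definite matrices are defined via the spectral theorem by taking the power of the eigenvalues. $\|\cdot\|$ is any matrix norm. *)

theory Defs
  imports "HOL-Complex_Analysis.Complex_Analysis"
          "Jordan_Normal_Form.Schur_Decomposition"
          "Jordan_Normal_Form.Char_Poly"
begin

definition hermitian_mat :: "nat \<Rightarrow> complex mat \<Rightarrow> bool" where
  "hermitian_mat n A \<longleftrightarrow> A \<in> carrier_mat n n \<and> mat_adjoint A = A"

definition unitary_mat :: "nat \<Rightarrow> complex mat \<Rightarrow> bool" where
  "unitary_mat n U \<longleftrightarrow> U \<in> carrier_mat n n \<and> U * mat_adjoint U = 1\<^sub>m n
     \<and> mat_adjoint U * U = 1\<^sub>m n"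

definition psd_mat :: "nat \<Rightarrow> complex mat \<Rightarrow> bool" where
  "psd_mat n A \<longleftrightarrow> hermitian_mat n A \<and>
     (\<forall>v \<in> carrier_vec n. 0 \<le> Re (scalar_prod (conjugate v) (A *\<^sub>v v)))"

definition Lambda :: "nat \<Rightarrow> (nat \<Rightarrow> real) \<Rightarrow> complex mat" where
  "Lambda n v = mat_diag n (\<lambda>i. complex_of_real (v i))"

definition psd_power :: "nat \<Rightarrow> real \<Rightarrow> complex mat \<Rightarrow> complex mat" where
  "psd_power n s A = (SOME B. \<exists>U lam. unitary_mat n U \<and> (\<forall>i<n. 0 \<le> lam i)
      \<and> A = U * Lambda n lam * mat_adjoint U
      \<and> B = U * Lambda n (\<lambda>i. lam i powr s) * mat_adjoint U)"

definition mat_inv :: "nat \<Rightarrow> complex mat \<Rightarrow> complex mat" where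
  "mat_inv n M = (SOME B. B \<in> carrier_mat n n \<and> M * B = 1\<^sub>m n \<and> B * M = 1\<^sub>m n)"

definition riesz_proj :: "nat \<Rightarrow> complex \<Rightarrow> real \<Rightarrow> complex mat \<Rightarrow> complex mat" where
  "riesz_proj n c \<rho> M = Matrix.mat n n (\<lambda>(i,j).
      (1 / (2 * pi * \<i>)) * contour_integral (circlepath c \<rho>)
        (\<lambda>z. mat_inv n (z \<cdot>\<^sub>m 1\<^sub>m n - M) $$ (i,j)))"

(* Frobenius norm (all norms on n x n matrices are equivalent) *)
definition mnorm :: "nat \<Rightarrow> complex mat \<Rightarrow> real" where
  "mnorm n A = sqrt (\<Sum>i<n. \<Sum>j<n. (cmod (A $$ (i,j)))\<^sup>2)"

end

theory Submission
  imports Defs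
begin

type_synonym cmat = "complex mat"

lemma adj_carrier[simp]: "(A::cmat) \<in> carrier_mat n m \<Longrightarrow> mat_adjoint A \<in> carrier_mat m n"
  unfolding mat_adjoint_def by (auto simp: mat_of_rows_def)

lemma adj_dims[simp]: "dim_row (mat_adjoint (A::cmat)) = dim_col A" "dim_col (mat_adjoint A) = dim_row A"
  unfolding mat_adjoint_def by (auto simp: mat_of_rows_def)

lemma adj_index[simp]: "i < dim_col A \<Longrightarrow> j < dim_row A \<Longrightarrow> mat_adjoint (A::cmat) $$ (i,j) = cnj (A $$ (j,i))"
  unfolding mat_adjoint_def by (auto simp: mat_of_rows_def)

lemma mult_entry: "A \<in> carrier_mat n m \<Longrightarrow> B \<in> carrier_mat m k \<Longrightarrow> i < n \<Longrightarrow> j < k \<Longrightarrow>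
  (A * B) $$ (i,j) = (\<Sum>l<m. A $$ (i,l) * B $$ (l,j))"
  by (auto simp: scalar_prod_def atLeast0LessThan intro!: sum.cong)

lemma Lambda_carrier[simp]: "Lambda n v \<in> carrier_mat n n"
  unfolding Lambda_def by simp

lemma Lambda_dims[simp]: "dim_row (Lambda n v) = n" "dim_col (Lambda n v) = n"
  unfolding Lambda_def mat_diag_def by auto

lemma Lambda_index: "i < n \<Longrightarrow> j < n \<Longrightarrow> Lambda n v $$ (i,j) = (if i = j then complex_of_real (v i) else 0)"
  unfolding Lambda_def mat_diag_def by auto

lemma adj_adj[simp]: "mat_adjoint (mat_adjoint (A::cmat)) = A"
  by (rule eq_matI) auto

lemma adj_mult: assumes "(A::cmat) \<in> carrier_mat n m" "B \<in> carrier_mat m k" shows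
   "mat_adjoint (A * B) = mat_adjoint B * mat_adjoint A"
proof (rule eq_matI)
  fix i j assume 
    i: "i < dim_row (mat_adjoint B * mat_adjoint A)" and j: "j < dim_col (mat_adjoint B * mat_adjoint A)"
  note A = assms(1) and B = assms(2)
  from i j A B have i: "i < k" and j: "j < n" by auto
  have "mat_adjoint (A * B) $$ (i, j) = cnj ((A*B) $$ (j,i))" using i j A B by simp
  also have "\<dots> = cnj (\<Sum>l<m. A $$ (j,l) * B $$ (l,i))" using i j A B by (subst mult_entry[of _ n m _ k]) auto
  also have "\<dots> = (\<Sum>l<m. mat_adjoint B $$ (i,l) * mat_adjoint A $$ (l,j))"
    using i j A B by (auto simp: mult.commute intro!: sum.cong)
  also have "\<dots> = (mat_adjoint B * mat_adjoint A) $$ (i, j)" using i j A B by (subst mult_entry[of _ k m _ n]) auto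
  finally show "mat_adjoint (A * B) $$ (i, j) = (mat_adjoint B * mat_adjoint A) $$ (i, j)" .
qed (insert assms, auto)

lemma adj_add: "(A::cmat) \<in> carrier_mat n m \<Longrightarrow> B \<in> carrier_mat n m \<Longrightarrow>
   mat_adjoint (A + B) = mat_adjoint A + mat_adjoint B"
  by (rule eq_matI) auto

lemma adj_minus: "(A::cmat) \<in> carrier_mat n m \<Longrightarrow> B \<in> carrier_mat n m \<Longrightarrow>
   mat_adjoint (A - B) = mat_adjoint A - mat_adjoint B"
  by (rule eq_matI) auto

lemma adj_one[simp]: "mat_adjoint (1\<^sub>m n :: cmat) = 1\<^sub>m n"
  by (rule eq_matI) auto

lemma triple_entry: "(U::cmat) \<in> carrier_mat n n \<Longrightarrow> i < n \<Longrightarrow> j < n \<Longrightarrow>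
  (U * Lambda n d * mat_adjoint U) $$ (i,j) = (\<Sum>k<n. U $$ (i,k) * d k * cnj (U $$ (j,k)))"
proof -
  assume U: "U \<in> carrier_mat n n" and i: "i < n" and j: "j < n"
  have "(U * Lambda n d * mat_adjoint U) $$ (i,j) = (\<Sum>l<n. (U * Lambda n d) $$ (i,l) * mat_adjoint U $$ (l,j))"
    using U i j by (intro mult_entry) auto
  also have "\<dots> = (\<Sum>l<n. (\<Sum>k<n. U $$ (i,k) * Lambda n d $$ (k,l)) * cnj (U $$ (j,l)))"
    using U i j by (intro sum.cong refl) (simp add: mult_entry[of U n n "Lambda n d" n] del: index_mult_mat)
  also have "\<dots> = (\<Sum>l<n. U $$ (i,l) * d l * cnj (U $$ (j,l)))"
  proof (intro sum.cong refl)
    fix l assume l: "l \<in> {..<n}"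
    have "(\<Sum>k<n. U $$ (i,k) * Lambda n d $$ (k,l)) = (\<Sum>k<n. if k = l then U $$ (i,l) * d l else 0)"
      using l by (intro sum.cong refl) (auto simp: Lambda_index)
    also have "\<dots> = U $$ (i,l) * d l" using l by simp
    finally show "(\<Sum>k<n. U $$ (i,k) * Lambda n d $$ (k,l)) * cnj (U $$ (j,l)) = U $$ (i,l) * d l * cnj (U $$ (j,l))" by simp
  qed
  finally show ?thesis .
qed

definition vnorm :: "complex vec \<Rightarrow> real" where
  "vnorm v = sqrt (\<Sum>i<dim_vec v. (cmod (v $ i))\<^sup>2)"

lemma cscalar_self: "(w::complex vec) \<bullet>c w = complex_of_real ((vnorm w)\<^sup>2)"
proof -
  have "w \<bullet>c w = (\<Sum>i<dim_vec w. w $ i * cnj (w $ i))"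
    by (simp add: scalar_prod_def atLeast0LessThan)
  also have "\<dots> = (\<Sum>i<dim_vec w. complex_of_real ((cmod (w $ i))\<^sup>2))"
    by (intro sum.cong refl) (simp add: complex_norm_square[symmetric])
  also have "\<dots> = complex_of_real ((vnorm w)\<^sup>2)"
    unfolding vnorm_def by (simp add: sum_nonneg)
  finally show ?thesis .
qed

lemma unit_completion:
  fixes v :: "complex vec"
  assumes v: "v \<in> carrier_vec m" and v0: "v \<noteq> 0\<^sub>v m"
  shows "\<exists>W. unitary_mat m W \<and> (\<forall>i<m. W $$ (i,0) = v $ i / complex_of_real (vnorm v))"
proof -
  interpret cof_vec_space m "TYPE(complex)" .
  let ?b = "basis_completion v"
  note bc = basis_completion[OF v v0]
  have m0: "m > 0" using v v0 by (cases m) auto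
  obtain vs where bv: "?b = v # vs" using bc(6,7) m0 by (cases ?b) auto
  define ws where "ws = gram_schmidt m ?b"
  note gs = gram_schmidt_result[OF bc(2) bc(4) bc(5) ws_def]
  have hd: "hd ws = v" unfolding ws_def bv using v by simp
  have lenws: "length ws = m" using gs bc by simp
  have ws0: "ws ! 0 = v" using hd lenws m0 by (cases ws) auto
  have wsc: "j < m \<Longrightarrow> ws ! j \<in> carrier_vec m" for j using gs(3) lenws by auto
  have wsdim: "j < m \<Longrightarrow> dim_vec (ws ! j) = m" for j using wsc by auto
  have orth: "j < m \<Longrightarrow> k < m \<Longrightarrow> (ws ! j \<bullet>c ws ! k = 0) = (j \<noteq> k)" for j k
    using gs(2) lenws by (auto simp: corthogonal_def)
  have npos: "j < m \<Longrightarrow> vnorm (ws ! j) \<noteq> 0" for j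
    using orth[of j j] cscalar_self[of "ws ! j"] by auto
  define W where "W = Matrix.mat m m (\<lambda>(i,j). (ws ! j) $ i / complex_of_real (vnorm (ws ! j)))"
  have W: "W \<in> carrier_mat m m" unfolding W_def by simp
  have WW: "mat_adjoint W * W = 1\<^sub>m m"
  proof (rule eq_matI)
    fix j k assume "j < dim_row (1\<^sub>m m :: cmat)" "k < dim_col (1\<^sub>m m :: cmat)"
    hence j: "j < m" and k: "k < m" by auto
    have "(mat_adjoint W * W) $$ (j,k) = (\<Sum>i<m. cnj (W $$ (i,j)) * W $$ (i,k))"
      using W j k by (subst mult_entry[of _ m m _ m]) auto
    also have "\<dots> = (\<Sum>i<m. (ws ! k) $ i * cnj ((ws ! j) $ i)) / (complex_of_real (vnorm (ws ! j)) * complex_of_real (vnorm (ws ! k)))"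
      unfolding sum_divide_distrib using j k by (intro sum.cong refl) (auto simp: W_def)
    also have "(\<Sum>i<m. (ws ! k) $ i * cnj ((ws ! j) $ i)) = ws ! k \<bullet>c ws ! j"
      using j k wsdim by (simp add: scalar_prod_def atLeast0LessThan)
    finally have eq: "(mat_adjoint W * W) $$ (j,k) = ws ! k \<bullet>c ws ! j / (complex_of_real (vnorm (ws ! j)) * complex_of_real (vnorm (ws ! k)))" .
    show "(mat_adjoint W * W) $$ (j,k) = 1\<^sub>m m $$ (j,k)"
    proof (cases "j = k")
      case True
      then show ?thesis unfolding eq using j npos[OF j] by (simp add: cscalar_self power2_eq_square)
    next
      case False
      then show ?thesis unfolding eq using j k orth[of k j] by simp
    qed
  qed (insert W, auto)
  have WW2: "W * mat_adjoint W = 1\<^sub>m m"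
    using mat_mult_left_right_inverse[OF adj_carrier[OF W] W WW] .
  have "unitary_mat m W" unfolding unitary_mat_def using W WW WW2 by auto
  moreover have "\<forall>i<m. W $$ (i,0) = v $ i / complex_of_real (vnorm v)"
    using m0 ws0 by (auto simp: W_def)
  ultimately show ?thesis by blast
qed

lemma unitary_carrier: "unitary_mat n U \<Longrightarrow> U \<in> carrier_mat n n"
  unfolding unitary_mat_def by auto

lemma unit_row: assumes "unitary_mat n U" "i < n" "j < n"
  shows "(\<Sum>k<n. U $$ (i,k) * cnj (U $$ (j,k))) = (if i = j then 1 else 0)"
proof -
  have U: "U \<in> carrier_mat n n" using assms unitary_carrier by auto
  have "(U * mat_adjoint U) $$ (i,j) = (\<Sum>k<n. U $$ (i,k) * cnj (U $$ (j,k)))"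
    using U assms by (subst mult_entry[of _ n n _ n]) auto
  moreover have "(U * mat_adjoint U) $$ (i,j) = (if i = j then 1 else 0)"
    using assms unfolding unitary_mat_def by auto
  ultimately show ?thesis by simp
qed

lemma unit_col: assumes "unitary_mat n U" "i < n" "j < n"
  shows "(\<Sum>k<n. cnj (U $$ (k,i)) * U $$ (k,j)) = (if i = j then 1 else 0)"
proof -
  have U: "U \<in> carrier_mat n n" using assms unitary_carrier by auto
  have "(mat_adjoint U * U) $$ (i,j) = (\<Sum>k<n. cnj (U $$ (k,i)) * U $$ (k,j))"
    using U assms by (subst mult_entry[of _ n n _ n]) auto
  moreover have "(mat_adjoint U * U) $$ (i,j) = (if i = j then 1 else 0)"
    using assms unfolding unitary_mat_def by auto
  ultimately show ?thesis by simp
qed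

lemma unitaryI_row: assumes U: "U \<in> carrier_mat n n"
  and r: "\<And>i j. i < n \<Longrightarrow> j < n \<Longrightarrow> (\<Sum>k<n. U $$ (i,k) * cnj (U $$ (j,k))) = (if i = j then 1 else 0)"
  shows "unitary_mat n U"
proof -
  have 1: "U * mat_adjoint U = 1\<^sub>m n"
  proof (rule eq_matI)
    fix i j assume "i < dim_row (1\<^sub>m n :: cmat)" "j < dim_col (1\<^sub>m n :: cmat)"
    hence i: "i < n" and j: "j < n" by auto
    have "(U * mat_adjoint U) $$ (i,j) = (\<Sum>k<n. U $$ (i,k) * cnj (U $$ (j,k)))"
      using U i j by (subst mult_entry[of _ n n _ n]) auto
    then show "(U * mat_adjoint U) $$ (i,j) = 1\<^sub>m n $$ (i,j)" using r[OF i j] i j by simp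
  qed (insert U, auto)
  have 2: "mat_adjoint U * U = 1\<^sub>m n"
    using mat_mult_left_right_inverse[OF U adj_carrier[OF U] 1] .
  show ?thesis unfolding unitary_mat_def using U 1 2 by auto
qed

lemma unitary_mult: assumes "unitary_mat n U" "unitary_mat n V" shows "unitary_mat n (U * V)"
proof -
  have U: "U \<in> carrier_mat n n" and V: "V \<in> carrier_mat n n" using assms unitary_carrier by auto
  have "(U * V) * mat_adjoint (U * V) = U * (V * mat_adjoint V) * mat_adjoint U"
  proof -
    have aU: "mat_adjoint U \<in> carrier_mat n n" and aV: "mat_adjoint V \<in> carrier_mat n n" using U V by auto
    have "(U * V) * mat_adjoint (U * V) = (U * V) * (mat_adjoint V * mat_adjoint U)" by (simp add: adj_mult[OF U V])
    also have "\<dots> = U * (V * (mat_adjoint V * mat_adjoint U))" using U V aU aV by (simp add: assoc_mult_mat[OF U V mult_carrier_mat[OF aV aU]])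
    also have "\<dots> = U * ((V * mat_adjoint V) * mat_adjoint U)" using U V aU aV by (simp add: assoc_mult_mat[OF V aV aU])
    also have "\<dots> = U * (V * mat_adjoint V) * mat_adjoint U" using U V aU aV by (simp add: assoc_mult_mat[OF U _ aU])
    finally show ?thesis .
  qed
  also have "\<dots> = 1\<^sub>m n" using assms U unfolding unitary_mat_def by simp
  finally have 1: "(U * V) * mat_adjoint (U * V) = 1\<^sub>m n" .
  have UV: "U * V \<in> carrier_mat n n" using U V by simp
  have 2: "mat_adjoint (U * V) * (U * V) = 1\<^sub>m n"
    using mat_mult_left_right_inverse[OF UV adj_carrier[OF UV] 1] .
  show ?thesis unfolding unitary_mat_def using UV 1 2 by auto
qed

definition blk :: "nat \<Rightarrow> cmat \<Rightarrow> cmat" where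
  "blk m U = Matrix.mat (Suc m) (Suc m) (\<lambda>(i,j). if i = 0 then (if j = 0 then 1 else 0)
      else if j = 0 then 0 else U $$ (i - 1, j - 1))"

lemma blk_carrier: "blk m U \<in> carrier_mat (Suc m) (Suc m)" unfolding blk_def by simp

lemma blk_unitary: assumes "unitary_mat m U" shows "unitary_mat (Suc m) (blk m U)"
proof (rule unitaryI_row[OF blk_carrier])
  fix i j assume i: "i < Suc m" and j: "j < Suc m"
  have e: "(\<Sum>k<Suc m. blk m U $$ (i,k) * cnj (blk m U $$ (j,k))) =
     blk m U $$ (i,0) * cnj (blk m U $$ (j,0)) + (\<Sum>k<m. blk m U $$ (i,Suc k) * cnj (blk m U $$ (j,Suc k)))"
    by (rule sum.lessThan_Suc_shift)
  show "(\<Sum>k<Suc m. blk m U $$ (i,k) * cnj (blk m U $$ (j,k))) = (if i = j then 1 else 0)"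
  proof (cases i)
    case 0
    then show ?thesis unfolding e using j by (cases j) (auto simp: blk_def)
  next
    case (Suc i')
    show ?thesis
    proof (cases j)
      case 0 then show ?thesis unfolding e using i Suc by (auto simp: blk_def)
    next
      case (Suc j')
      have "(\<Sum>k<m. blk m U $$ (i,Suc k) * cnj (blk m U $$ (j,Suc k))) = (\<Sum>k<m. U $$ (i',k) * cnj (U $$ (j',k)))"
        using i j `i = Suc i'` Suc by (intro sum.cong refl) (auto simp: blk_def)
      also have "\<dots> = (if i' = j' then 1 else 0)" using unit_row[OF assms, of i' j'] i j `i = Suc i'` Suc by auto
      finally show ?thesis unfolding e using i j `i = Suc i'` Suc by (auto simp: blk_def)
    qed
  qed
qed

lemma hermitian_entry: "hermitian_mat n A \<Longrightarrow> i < n \<Longrightarrow> j < n \<Longrightarrow> A $$ (i,j) = cnj (A $$ (j,i))"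
  unfolding hermitian_mat_def by (metis adj_index carrier_matD(1) carrier_matD(2))

lemma massoc: "(A::cmat) \<in> carrier_mat n n \<Longrightarrow> B \<in> carrier_mat n n \<Longrightarrow> C \<in> carrier_mat n n \<Longrightarrow> A * B * C = A * (B * C)"
  by (rule assoc_mult_mat)

lemma assoc_dims: "dim_col (A::cmat) = dim_row B \<Longrightarrow> dim_col B = dim_row C \<Longrightarrow> A * B * C = A * (B * C)"
  by (rule assoc_mult_mat[of A "dim_row A" "dim_col A" B "dim_col B" C "dim_col C"]) auto

lemma spectral:
  assumes "hermitian_mat n A"
  shows "\<exists>U d. unitary_mat n U \<and> A = U * Lambda n d * mat_adjoint U"
  using assms
proof (induction n arbitrary: A)
  case 0
  have A: "A \<in> carrier_mat 0 0" using 0 unfolding hermitian_mat_def by auto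
  have u: "unitary_mat 0 (1\<^sub>m 0)" unfolding unitary_mat_def by simp
  have "A = 1\<^sub>m 0 * Lambda 0 (\<lambda>_. 0) * mat_adjoint (1\<^sub>m 0)" using A by (intro eq_matI) auto
  then show ?case using u by blast
next
  case (Suc m)
  let ?n = "Suc m"
  have A: "A \<in> carrier_mat ?n ?n" using Suc.prems unfolding hermitian_mat_def by auto
  have "degree (char_poly A) = ?n" using degree_monic_char_poly[OF A] by simp
  hence "\<not> constant (poly (char_poly A))" using constant_degree by (metis nat.distinct(1))
  then obtain e where "poly (char_poly A) e = 0" using fundamental_theorem_of_algebra by blast
  hence "eigenvalue A e" using eigenvalue_root_char_poly[OF A] by simp
  then obtain v where ev: "eigenvector A v e" unfolding eigenvalue_def by blast
  hence v: "v \<in> carrier_vec ?n" "v \<noteq> 0\<^sub>v ?n" "A *\<^sub>v v = e \<cdot>\<^sub>v v" using A unfolding eigenvector_def by auto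
  obtain W where W: "unitary_mat ?n W" and W0: "\<forall>i<?n. W $$ (i,0) = v $ i / complex_of_real (vnorm v)"
    using unit_completion[OF v(1) v(2)] by blast
  have Wc: "W \<in> carrier_mat ?n ?n" using W unitary_carrier by auto
  have aWc: "mat_adjoint W \<in> carrier_mat ?n ?n" using Wc by simp
  define B where "B = mat_adjoint W * A * W"
  have Bc: "B \<in> carrier_mat ?n ?n" unfolding B_def by (rule mult_carrier_mat[OF mult_carrier_mat[OF aWc A] Wc])
  have Aa: "mat_adjoint A = A" using Suc.prems unfolding hermitian_mat_def by auto
  have Bh: "hermitian_mat ?n B"
  proof -
    have "mat_adjoint B = mat_adjoint W * mat_adjoint (mat_adjoint W * A)"
      unfolding B_def by (rule adj_mult[OF mult_carrier_mat[OF aWc A] Wc])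
    also have "mat_adjoint (mat_adjoint W * A) = mat_adjoint A * W"
      using adj_mult[OF aWc A] by simp
    finally have "mat_adjoint B = mat_adjoint W * (A * W)" using Aa by simp
    hence "mat_adjoint B = B" unfolding B_def using massoc[OF aWc A Wc] by simp
    then show ?thesis unfolding hermitian_mat_def using Bc by simp
  qed
  have AW0: "(A * W) $$ (k,0) = e * W $$ (k,0)" if k: "k < ?n" for k
  proof -
    have "(A * W) $$ (k,0) = (\<Sum>l<?n. A $$ (k,l) * W $$ (l,0))"
      using A Wc k by (subst mult_entry[of _ ?n ?n _ ?n]) auto
    also have "\<dots> = (\<Sum>l<?n. A $$ (k,l) * v $ l) / complex_of_real (vnorm v)"
      unfolding sum_divide_distrib using W0 by (intro sum.cong refl) auto
    also have "(\<Sum>l<?n. A $$ (k,l) * v $ l) = (A *\<^sub>v v) $ k"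
      using A v(1) k by (auto simp: scalar_prod_def atLeast0LessThan simp del: v(3))
    also have "\<dots> = e * v $ k" using v k by simp
    finally show ?thesis using W0 k by simp
  qed
  have B0: "B $$ (i,0) = (if i = 0 then e else 0)" if i: "i < ?n" for i
  proof -
    have "B = mat_adjoint W * (A * W)" unfolding B_def using massoc[OF aWc A Wc] .
    hence "B $$ (i,0) = (\<Sum>k<?n. cnj (W $$ (k,i)) * (A * W) $$ (k,0))"
      using A Wc i by (simp add: mult_entry[of _ ?n ?n _ ?n] del: index_mult_mat)
    also have "\<dots> = e * (\<Sum>k<?n. cnj (W $$ (k,i)) * W $$ (k,0))"
      unfolding sum_distrib_left by (intro sum.cong refl) (simp add: AW0)
    also have "\<dots> = e * (if i = 0 then 1 else 0)" using unit_col[OF W i, of 0] by simp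
    finally show ?thesis by simp
  qed
  have er: "cnj e = e" using hermitian_entry[OF Bh, of 0 0] B0[of 0] by simp
  have B0': "B $$ (0,j) = (if j = 0 then e else 0)" if j: "j < ?n" for j
    using hermitian_entry[OF Bh, of 0 j] B0[OF j] j er by auto
  define A3 where "A3 = Matrix.mat m m (\<lambda>(i,j). B $$ (Suc i, Suc j))"
  have A3h: "hermitian_mat m A3"
    unfolding hermitian_mat_def
  proof
    show "A3 \<in> carrier_mat m m" unfolding A3_def by simp
    show "mat_adjoint A3 = A3"
    proof (rule eq_matI)
      fix i j assume "i < dim_row A3" "j < dim_col A3"
      hence i: "i < m" and j: "j < m" by (auto simp: A3_def)
      show "mat_adjoint A3 $$ (i, j) = A3 $$ (i, j)"
        using i j hermitian_entry[OF Bh, of "Suc j" "Suc i"] by (simp add: A3_def)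
    qed (auto simp: A3_def)
  qed
  from Suc.IH[OF A3h] obtain U3 d3 where U3: "unitary_mat m U3" and A3eq: "A3 = U3 * Lambda m d3 * mat_adjoint U3"
    by blast
  have U3c: "U3 \<in> carrier_mat m m" using U3 unitary_carrier by auto
  define d where "d = (\<lambda>i. if i = 0 then Re e else d3 (i - 1))"
  define U' where "U' = blk m U3"
  have U': "unitary_mat ?n U'" by (simp add: blk_unitary U3 U'_def)
  have U'c: "U' \<in> carrier_mat ?n ?n" using U' unitary_carrier by auto
  have eRe: "complex_of_real (Re e) = e" using er by (metis Reals_cnj_iff complex_is_Real_iff of_real_Re)
  have BU: "B = U' * Lambda ?n d * mat_adjoint U'"
  proof (rule eq_matI)
    fix i j assume "i < dim_row (U' * Lambda ?n d * mat_adjoint U')" "j < dim_col (U' * Lambda ?n d * mat_adjoint U')"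
    hence i: "i < ?n" and j: "j < ?n" using U'c by auto
    have "(U' * Lambda ?n d * mat_adjoint U') $$ (i,j) = (\<Sum>k<?n. U' $$ (i,k) * d k * cnj (U' $$ (j,k)))"
      by (rule triple_entry[OF U'c i j])
    also have "\<dots> = U' $$ (i,0) * d 0 * cnj (U' $$ (j,0)) + (\<Sum>k<m. U' $$ (i,Suc k) * d (Suc k) * cnj (U' $$ (j,Suc k)))"
      by (rule sum.lessThan_Suc_shift)
    finally have eq: "(U' * Lambda ?n d * mat_adjoint U') $$ (i,j) = \<dots>" .
    show "B $$ (i,j) = (U' * Lambda ?n d * mat_adjoint U') $$ (i,j)"
    proof (cases i)
      case 0
      then show ?thesis unfolding eq using j B0'[OF j] eRe by (cases j) (auto simp: U'_def blk_def d_def)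
    next
      case (Suc i')
      show ?thesis
      proof (cases j)
        case 0 then show ?thesis unfolding eq using i Suc B0[OF i] by (auto simp: U'_def blk_def d_def)
      next
        case (Suc j')
        have "(\<Sum>k<m. U' $$ (i,Suc k) * d (Suc k) * cnj (U' $$ (j,Suc k))) = (\<Sum>k<m. U3 $$ (i',k) * d3 k * cnj (U3 $$ (j',k)))"
          using i j `i = Suc i'` Suc by (intro sum.cong refl) (auto simp: U'_def blk_def d_def)
        also have "\<dots> = A3 $$ (i',j')" unfolding A3eq using i j `i = Suc i'` Suc
          by (intro triple_entry[symmetric] U3c) auto
        also have "\<dots> = B $$ (i,j)" using i j `i = Suc i'` Suc by (simp add: A3_def)
        finally show ?thesis unfolding eq using i j `i = Suc i'` Suc by (auto simp: U'_def blk_def d_def)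
      qed
    qed
  qed (insert Bc U'c, auto)
  have WW: "W * mat_adjoint W = 1\<^sub>m ?n" using W unfolding unitary_mat_def by auto
  have aWA: "mat_adjoint W * A \<in> carrier_mat ?n ?n" using aWc A by simp
  have "W * B * mat_adjoint W = W * ((mat_adjoint W * A * W) * mat_adjoint W)"
    unfolding B_def by (rule massoc[OF Wc mult_carrier_mat[OF aWA Wc] aWc])
  also have "(mat_adjoint W * A * W) * mat_adjoint W = (mat_adjoint W * A) * (W * mat_adjoint W)"
    by (rule massoc[OF aWA Wc aWc])
  also have "\<dots> = mat_adjoint W * A" using WW right_mult_one_mat[OF aWA] by simp
  also have "W * (mat_adjoint W * A) = (W * mat_adjoint W) * A" by (rule massoc[OF Wc aWc A, symmetric])
  also have "\<dots> = A" using WW A by simp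
  finally have AB: "A = W * B * mat_adjoint W" by simp
  have Lc: "Lambda ?n d \<in> carrier_mat ?n ?n" by simp
  have "A = (W * U') * Lambda ?n d * mat_adjoint (W * U')"
    unfolding AB BU adj_mult[OF Wc U'c] using Wc U'c
    by (simp add: assoc_dims)
  moreover have "unitary_mat ?n (W * U')" using unitary_mult[OF W U'] .
  ultimately show ?case by blast
qed

lemma diag_entry_right: "(U::cmat) \<in> carrier_mat n n \<Longrightarrow> i < n \<Longrightarrow> k < n \<Longrightarrow> (U * Lambda n d) $$ (i,k) = U $$ (i,k) * d k"
proof -
  assume U: "U \<in> carrier_mat n n" and i: "i < n" and k: "k < n"
  have "(U * Lambda n d) $$ (i,k) = (\<Sum>l<n. U $$ (i,l) * Lambda n d $$ (l,k))"
    using U i k by (intro mult_entry) auto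
  also have "\<dots> = (\<Sum>l<n. if l = k then U $$ (i,k) * d k else 0)"
    using k by (intro sum.cong refl) (auto simp: Lambda_index)
  finally show ?thesis using k by simp
qed

lemma diag_entry_left: "(U::cmat) \<in> carrier_mat n n \<Longrightarrow> i < n \<Longrightarrow> k < n \<Longrightarrow> (Lambda n d * U) $$ (i,k) = d i * U $$ (i,k)"
proof -
  assume U: "U \<in> carrier_mat n n" and i: "i < n" and k: "k < n"
  have "(Lambda n d * U) $$ (i,k) = (\<Sum>l<n. Lambda n d $$ (i,l) * U $$ (l,k))"
    using U i k by (intro mult_entry) auto
  also have "\<dots> = (\<Sum>l<n. if l = i then d i * U $$ (i,k) else 0)"
    using i by (intro sum.cong refl) (auto simp: Lambda_index)
  finally show ?thesis using i by simp
qed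

lemma spec_AU: assumes U: "unitary_mat n U" and A: "A = U * Lambda n d * mat_adjoint U"
  shows "A * U = U * Lambda n d"
proof -
  have Uc: "U \<in> carrier_mat n n" using U unitary_carrier by auto
  have "A * U = U * Lambda n d * (mat_adjoint U * U)" unfolding A using Uc by (simp add: assoc_dims)
  also have "mat_adjoint U * U = 1\<^sub>m n" using U unfolding unitary_mat_def by auto
  finally show ?thesis using Uc by simp
qed

lemma spec_UA: assumes U: "unitary_mat n U" and A: "A = U * Lambda n d * mat_adjoint U"
  shows "mat_adjoint U * A = Lambda n d * mat_adjoint U"
proof -
  have Uc: "U \<in> carrier_mat n n" using U unitary_carrier by auto
  have "mat_adjoint U * A = (mat_adjoint U * U) * Lambda n d * mat_adjoint U" unfolding A using Uc by (simp add: assoc_dims)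
  also have "mat_adjoint U * U = 1\<^sub>m n" using U unfolding unitary_mat_def by auto
  finally show ?thesis using Uc by simp
qed

lemma psd_spectral:
  assumes "psd_mat n A"
  shows "\<exists>U d. unitary_mat n U \<and> (\<forall>i<n. 0 \<le> d i) \<and> A = U * Lambda n d * mat_adjoint U"
proof -
  have h: "hermitian_mat n A" using assms unfolding psd_mat_def by auto
  obtain U d where U: "unitary_mat n U" and A: "A = U * Lambda n d * mat_adjoint U"
    using spectral[OF h] by blast
  have Uc: "U \<in> carrier_mat n n" using U unitary_carrier by auto
  have Ac: "A \<in> carrier_mat n n" using h unfolding hermitian_mat_def by auto
  have "0 \<le> d k" if k: "k < n" for k
  proof -
    let ?v = "col U k"
    have vc: "?v \<in> carrier_vec n" using Uc by auto
    have Av: "(A *\<^sub>v ?v) $ i = U $$ (i,k) * d k" if i: "i < n" for i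
    proof -
      have "(A *\<^sub>v ?v) $ i = (A * U) $$ (i,k)" using Ac Uc i k by simp
      also have "\<dots> = U $$ (i,k) * d k" unfolding spec_AU[OF U A] using diag_entry_right[OF Uc i k] by simp
      finally show ?thesis .
    qed
    have "scalar_prod (conjugate ?v) (A *\<^sub>v ?v) = (\<Sum>i<n. cnj (U $$ (i,k)) * (U $$ (i,k) * d k))"
      using Ac Uc k Av by (simp add: scalar_prod_def atLeast0LessThan del: index_mult_mat_vec)
    also have "\<dots> = (\<Sum>i<n. cnj (U $$ (i,k)) * U $$ (i,k)) * d k"
      by (simp add: sum_distrib_right mult.assoc)
    also have "\<dots> = d k" using unit_col[OF U k k] by simp
    finally have "scalar_prod (conjugate ?v) (A *\<^sub>v ?v) = d k" .
    moreover have "0 \<le> Re (scalar_prod (conjugate ?v) (A *\<^sub>v ?v))"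
      using assms vc unfolding psd_mat_def by blast
    ultimately show ?thesis by simp
  qed
  then show ?thesis using U A by blast
qed

lemma psd_power_spec:
  assumes "psd_mat n A"
  shows "\<exists>U lam. unitary_mat n U \<and> (\<forall>i<n. 0 \<le> lam i) \<and> A = U * Lambda n lam * mat_adjoint U
      \<and> psd_power n s A = U * Lambda n (\<lambda>i. lam i powr s) * mat_adjoint U"
proof -
  obtain U d where "unitary_mat n U \<and> (\<forall>i<n. 0 \<le> d i) \<and> A = U * Lambda n d * mat_adjoint U"
    using psd_spectral[OF assms] by blast
  hence ex: "\<exists>B U lam. unitary_mat n U \<and> (\<forall>i<n. 0 \<le> lam i)
      \<and> A = U * Lambda n lam * mat_adjoint U
      \<and> B = U * Lambda n (\<lambda>i. lam i powr s) * mat_adjoint U" by blast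
  show ?thesis unfolding psd_power_def using someI_ex[OF ex] by blast
qed

lemma mat_diag_dims[simp]: "dim_row (mat_diag n f) = n" "dim_col (mat_diag n f) = n"
  unfolding mat_diag_def by auto

lemma FD_entry: "(U::cmat) \<in> carrier_mat n n \<Longrightarrow> i < n \<Longrightarrow> j < n \<Longrightarrow>
  (U * mat_diag n f * mat_adjoint U) $$ (i,j) = (\<Sum>k<n. U $$ (i,k) * f k * cnj (U $$ (j,k)))"
proof -
  assume U: "U \<in> carrier_mat n n" and i: "i < n" and j: "j < n"
  have "(U * mat_diag n f * mat_adjoint U) $$ (i,j) = (\<Sum>l<n. (U * mat_diag n f) $$ (i,l) * mat_adjoint U $$ (l,j))"
    using U i j by (intro mult_entry) auto
  also have "\<dots> = (\<Sum>l<n. (\<Sum>k<n. U $$ (i,k) * mat_diag n f $$ (k,l)) * cnj (U $$ (j,l)))"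
    using U i j by (intro sum.cong refl) (simp add: mult_entry[of U n n "mat_diag n f" n] del: index_mult_mat)
  also have "\<dots> = (\<Sum>l<n. U $$ (i,l) * f l * cnj (U $$ (j,l)))"
  proof (intro sum.cong refl)
    fix l assume l: "l \<in> {..<n}"
    have "(\<Sum>k<n. U $$ (i,k) * mat_diag n f $$ (k,l)) = (\<Sum>k<n. if k = l then U $$ (i,l) * f l else 0)"
      using l by (intro sum.cong refl) (auto simp: mat_diag_def)
    also have "\<dots> = U $$ (i,l) * f l" using l by simp
    finally show "(\<Sum>k<n. U $$ (i,k) * mat_diag n f $$ (k,l)) * cnj (U $$ (j,l)) = U $$ (i,l) * f l * cnj (U $$ (j,l))" by simp
  qed
  finally show ?thesis .
qed

lemma Lambda_diag: "Lambda n d = mat_diag n (\<lambda>i. complex_of_real (d i))"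
  unfolding Lambda_def ..

lemma diag_mult_diag: "mat_diag n f * mat_diag n g = mat_diag n (\<lambda>k. f k * (g k :: complex))"
proof (rule eq_matI)
  fix i j assume "i < dim_row (mat_diag n (\<lambda>k. f k * g k))" "j < dim_col (mat_diag n (\<lambda>k. f k * g k))"
  hence i: "i < n" and j: "j < n" by (auto simp: mat_diag_def)
  have "(mat_diag n f * mat_diag n g) $$ (i,j) = (\<Sum>l<n. mat_diag n f $$ (i,l) * mat_diag n g $$ (l,j))"
    using i j by (intro mult_entry) auto
  also have "\<dots> = (\<Sum>l<n. if l = i then (if i = j then f i * g i else 0) else 0)"
    using i j by (intro sum.cong refl) (auto simp: mat_diag_def)
  also have "\<dots> = mat_diag n (\<lambda>k. f k * g k) $$ (i,j)" using i j by (simp add: mat_diag_def)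
  finally show "(mat_diag n f * mat_diag n g) $$ (i,j) = mat_diag n (\<lambda>k. f k * g k) $$ (i,j)" .
qed (auto simp: mat_diag_def)

lemma FD_mult: assumes V: "unitary_mat n V"
  shows "(V * mat_diag n f * mat_adjoint V) * (V * mat_diag n g * mat_adjoint V) = V * mat_diag n (\<lambda>k. f k * g k) * mat_adjoint V"
proof -
  have Vc: "V \<in> carrier_mat n n" using V unitary_carrier by auto
  have "(V * mat_diag n f * mat_adjoint V) * (V * mat_diag n g * mat_adjoint V) =
        V * (mat_diag n f * ((mat_adjoint V * V) * (mat_diag n g * mat_adjoint V)))"
    using Vc by (simp add: assoc_dims)
  also have "mat_adjoint V * V = 1\<^sub>m n" using V unfolding unitary_mat_def by auto
  also have "1\<^sub>m n * (mat_diag n g * mat_adjoint V) = mat_diag n g * mat_adjoint V"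
    using Vc by (intro left_mult_one_mat) auto
  also have "mat_diag n f * (mat_diag n g * mat_adjoint V) = (mat_diag n f * mat_diag n g) * mat_adjoint V"
    using Vc by (intro assoc_mult_mat[symmetric]) auto
  also have "mat_diag n f * mat_diag n g = mat_diag n (\<lambda>k. f k * g k)" by (rule diag_mult_diag)
  also have "V * (mat_diag n (\<lambda>k. f k * g k) * mat_adjoint V) = V * mat_diag n (\<lambda>k. f k * g k) * mat_adjoint V"
    using Vc by (intro assoc_mult_mat[symmetric]) auto
  finally show ?thesis .
qed

lemma FD_one: assumes V: "unitary_mat n V" shows "V * mat_diag n (\<lambda>k. 1) * mat_adjoint V = 1\<^sub>m n"
proof -
  have Vc: "V \<in> carrier_mat n n" using V unitary_carrier by auto
  have "mat_diag n (\<lambda>k. 1) = (1\<^sub>m n :: cmat)" by (rule eq_matI) (auto simp: mat_diag_def)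
  then show ?thesis using V Vc unfolding unitary_mat_def by simp
qed

lemma mat_inv_eq: assumes G: "G \<in> carrier_mat n n" and H: "H \<in> carrier_mat n n"
  and GH: "G * H = 1\<^sub>m n" and HG: "H * G = 1\<^sub>m n" shows "mat_inv n G = H"
proof -
  have ex: "\<exists>B. B \<in> carrier_mat n n \<and> G * B = 1\<^sub>m n \<and> B * G = 1\<^sub>m n" using H GH HG by blast
  define B where "B = mat_inv n G"
  have B: "B \<in> carrier_mat n n" "G * B = 1\<^sub>m n" "B * G = 1\<^sub>m n"
    using someI_ex[OF ex] unfolding B_def mat_inv_def by auto
  have "B = B * (G * H)" using GH B by simp
  also have "\<dots> = (B * G) * H" by (rule assoc_mult_mat[OF B(1) G H, symmetric])
  also have "\<dots> = H" unfolding B(3) using H by simp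
  finally show ?thesis unfolding B_def by simp
qed

lemma eigen_col: assumes V: "unitary_mat n V" and M: "M = V * Lambda n mu * mat_adjoint V" and k: "k < n"
  shows "eigenvalue M (complex_of_real (mu k))"
proof -
  have Vc: "V \<in> carrier_mat n n" using V unitary_carrier by auto
  have Mc: "M \<in> carrier_mat n n" unfolding M by (rule mult_carrier_mat[OF mult_carrier_mat[OF Vc Lambda_carrier] adj_carrier[OF Vc]])
  let ?v = "col V k"
  have vc: "?v \<in> carrier_vec n" using Vc by auto
  have s1: "(\<Sum>i<n. cnj (V $$ (i,k)) * V $$ (i,k)) = 1" using unit_col[OF V k k] by simp
  have "?v \<noteq> 0\<^sub>v n"
  proof
    assume eq: "?v = 0\<^sub>v n"
    have "V $$ (i,k) = 0" if i: "i < n" for i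
    proof -
      have "col V k $ i = 0\<^sub>v n $ i" using eq by simp
      then show ?thesis using i k Vc by simp
    qed
    hence "(\<Sum>i<n. cnj (V $$ (i,k)) * V $$ (i,k)) = 0" by simp
    with s1 show False by simp
  qed
  moreover have "M *\<^sub>v ?v = complex_of_real (mu k) \<cdot>\<^sub>v ?v"
  proof (rule eq_vecI)
    fix i assume "i < dim_vec (complex_of_real (mu k) \<cdot>\<^sub>v ?v)"
    hence i: "i < n" using Vc by simp
    have "(M *\<^sub>v ?v) $ i = (M * V) $$ (i,k)" using Mc Vc i k by simp
    also have "\<dots> = V $$ (i,k) * mu k" unfolding spec_AU[OF V M] using diag_entry_right[OF Vc i k] by simp
    also have "\<dots> = complex_of_real (mu k) * V $$ (i,k)" by (rule mult.commute)
    also have "\<dots> = (complex_of_real (mu k) \<cdot>\<^sub>v ?v) $ i" using i k Vc by simp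
    finally show "(M *\<^sub>v ?v) $ i = (complex_of_real (mu k) \<cdot>\<^sub>v ?v) $ i" .
  next
    show "dim_vec (M *\<^sub>v ?v) = dim_vec (complex_of_real (mu k) \<cdot>\<^sub>v ?v)" using Mc Vc by simp
  qed
  ultimately have "eigenvector M ?v (complex_of_real (mu k))" using vc Mc unfolding eigenvector_def by (simp add: carrier_matD)
  then show ?thesis unfolding eigenvalue_def by blast
qed

lemma winding_circ: assumes "0 < \<rho>" and "cmod (w - c) \<noteq> \<rho>"
  shows "winding_number (circlepath c \<rho>) w = (if cmod (w - c) < \<rho> then 1 else 0)"
proof (cases "cmod (w - c) < \<rho>")
  case True
  then show ?thesis using winding_number_circlepath[of w c \<rho>] by simp
next
  case False
  hence far: "w \<notin> cball c \<rho>" using assms by (auto simp: dist_norm norm_minus_commute)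
  have "winding_number (circlepath c \<rho>) w = 0"
    by (rule winding_number_zero_outside[OF _ convex_cball _ far]) (use assms in \<open>auto simp: sphere_cball\<close>)
  then show ?thesis using False by simp
qed

lemma inv_formula:
  assumes V: "unitary_mat n V" and M: "M = V * Lambda n mu * mat_adjoint V"
    and z: "\<forall>k<n. z \<noteq> complex_of_real (mu k)"
  shows "mat_inv n (z \<cdot>\<^sub>m 1\<^sub>m n - M) = V * mat_diag n (\<lambda>k. 1 / (z - complex_of_real (mu k))) * mat_adjoint V"
proof -
  have Vc: "V \<in> carrier_mat n n" using V unitary_carrier by auto
  have Mc: "M \<in> carrier_mat n n" unfolding M by (rule mult_carrier_mat[OF mult_carrier_mat[OF Vc Lambda_carrier] adj_carrier[OF Vc]])
  let ?G = "z \<cdot>\<^sub>m 1\<^sub>m n - M"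
  let ?D1 = "V * mat_diag n (\<lambda>k. z - complex_of_real (mu k)) * mat_adjoint V"
  let ?H = "V * mat_diag n (\<lambda>k. 1 / (z - complex_of_real (mu k))) * mat_adjoint V"
  have Gc: "?G \<in> carrier_mat n n" by (rule minus_carrier_mat[OF Mc])
  have Hc: "?H \<in> carrier_mat n n" by (rule mult_carrier_mat[OF mult_carrier_mat[OF Vc mat_diag_dim] adj_carrier[OF Vc]])
  have GD: "?G = ?D1"
  proof (rule eq_matI)
    fix i j assume "i < dim_row ?D1" "j < dim_col ?D1"
    hence i: "i < n" and j: "j < n" using Vc by auto
    have "?D1 $$ (i,j) = (\<Sum>k<n. V $$ (i,k) * (z - complex_of_real (mu k)) * cnj (V $$ (j,k)))"
      by (rule FD_entry[OF Vc i j])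
    also have "\<dots> = z * (\<Sum>k<n. V $$ (i,k) * cnj (V $$ (j,k))) - (\<Sum>k<n. V $$ (i,k) * complex_of_real (mu k) * cnj (V $$ (j,k)))"
      by (simp add: sum_distrib_left sum_subtractf[symmetric] algebra_simps)
    also have "(\<Sum>k<n. V $$ (i,k) * cnj (V $$ (j,k))) = (if i = j then 1 else 0)" by (rule unit_row[OF V i j])
    also have "(\<Sum>k<n. V $$ (i,k) * complex_of_real (mu k) * cnj (V $$ (j,k))) = M $$ (i,j)"
      unfolding M by (rule triple_entry[OF Vc i j, symmetric])
    finally show "?G $$ (i,j) = ?D1 $$ (i,j)" using i j Mc by simp
  qed (insert Mc Vc, auto)
  have d1: "mat_diag n (\<lambda>k. (z - complex_of_real (mu k)) * (1 / (z - complex_of_real (mu k)))) = mat_diag n (\<lambda>k. 1)"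
    by (rule eq_matI) (use z in \<open>auto simp: mat_diag_def\<close>)
  have d2: "mat_diag n (\<lambda>k. (1 / (z - complex_of_real (mu k))) * (z - complex_of_real (mu k))) = mat_diag n (\<lambda>k. 1)"
    by (rule eq_matI) (use z in \<open>auto simp: mat_diag_def\<close>)
  have GH: "?G * ?H = 1\<^sub>m n" unfolding GD FD_mult[OF V] d1 FD_one[OF V] ..
  have HG: "?H * ?G = 1\<^sub>m n" unfolding GD FD_mult[OF V] d2 FD_one[OF V] ..
  show ?thesis by (rule mat_inv_eq[OF Gc Hc GH HG])
qed

lemma riesz_formula:
  assumes V: "unitary_mat n V" and M: "M = V * Lambda n mu * mat_adjoint V"
    and noeig: "\<forall>z\<in>sphere c \<rho>. \<not> eigenvalue M z" and rho: "0 < \<rho>"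
  shows "riesz_proj n c \<rho> M = Matrix.mat n n (\<lambda>(i,j). \<Sum>k<n.
      (if cmod (complex_of_real (mu k) - c) < \<rho> then 1 else 0) * V $$ (i,k) * cnj (V $$ (j,k)))"
proof -
  have Vc: "V \<in> carrier_mat n n" using V unitary_carrier by auto
  have off: "cmod (complex_of_real (mu k) - c) \<noteq> \<rho>" if k: "k < n" for k
  proof
    assume "cmod (complex_of_real (mu k) - c) = \<rho>"
    hence "complex_of_real (mu k) \<in> sphere c \<rho>" by (simp add: dist_norm norm_minus_commute)
    with noeig eigen_col[OF V M k] show False by blast
  qed
  have znot: "\<forall>k<n. z \<noteq> complex_of_real (mu k)" if z: "z \<in> sphere c \<rho>" for z
  proof (intro allI impI)
    fix k assume k: "k < n"
    show "z \<noteq> complex_of_real (mu k)" using off[OF k] z by (auto simp: dist_norm norm_minus_commute)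
  qed
  define chi where "chi k = (if cmod (complex_of_real (mu k) - c) < \<rho> then 1 else (0::complex))" for k
  show ?thesis
  proof (rule eq_matI)
    fix i j assume "i < dim_row (Matrix.mat n n (\<lambda>(i,j). \<Sum>k<n.
      (if cmod (complex_of_real (mu k) - c) < \<rho> then 1 else 0) * V $$ (i,k) * cnj (V $$ (j,k))))"
      "j < dim_col (Matrix.mat n n (\<lambda>(i,j). \<Sum>k<n.
      (if cmod (complex_of_real (mu k) - c) < \<rho> then 1 else 0) * V $$ (i,k) * cnj (V $$ (j,k))))"
    hence i: "i < n" and j: "j < n" by auto
    define a where "a k = V $$ (i,k) * cnj (V $$ (j,k))" for k
    have each: "((\<lambda>z. a k * (1 / (z - complex_of_real (mu k)))) has_contour_integral
        a k * (2 * pi * \<i> * chi k)) (circlepath c \<rho>)" if k: "k \<in> {..<n}" for k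
    proof -
      have "complex_of_real (mu k) \<notin> path_image (circlepath c \<rho>)"
        using off k rho by (auto simp: dist_norm norm_minus_commute)
      from has_contour_integral_winding_number[OF valid_path_circlepath this]
      have "((\<lambda>w. 1 / (w - complex_of_real (mu k))) has_contour_integral
          2 * pi * \<i> * chi k) (circlepath c \<rho>)"
        using winding_circ[OF rho off] k unfolding chi_def by simp
      then show ?thesis by (rule has_contour_integral_lmul)
    qed
    have sum: "((\<lambda>z. \<Sum>k<n. a k * (1 / (z - complex_of_real (mu k)))) has_contour_integral
        (\<Sum>k<n. a k * (2 * pi * \<i> * chi k))) (circlepath c \<rho>)"
      by (rule has_contour_integral_sum[OF finite_lessThan each])
    have eqf: "(\<Sum>k<n. a k * (1 / (z - complex_of_real (mu k)))) = mat_inv n (z \<cdot>\<^sub>m 1\<^sub>m n - M) $$ (i,j)"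
      if z: "z \<in> path_image (circlepath c \<rho>)" for z
    proof -
      have zs: "z \<in> sphere c \<rho>" using z rho by simp
      show ?thesis unfolding inv_formula[OF V M znot[OF zs]] FD_entry[OF Vc i j] a_def
        by (intro sum.cong refl) (simp add: algebra_simps)
    qed
    have "((\<lambda>z. mat_inv n (z \<cdot>\<^sub>m 1\<^sub>m n - M) $$ (i,j)) has_contour_integral
        (\<Sum>k<n. a k * (2 * pi * \<i> * chi k))) (circlepath c \<rho>)"
      by (rule has_contour_integral_eq[OF sum eqf])
    hence ci: "contour_integral (circlepath c \<rho>) (\<lambda>z. mat_inv n (z \<cdot>\<^sub>m 1\<^sub>m n - M) $$ (i,j)) =
        (\<Sum>k<n. a k * (2 * pi * \<i> * chi k))" by (rule contour_integral_unique)
    have "riesz_proj n c \<rho> M $$ (i,j) = 1 / (2 * pi * \<i>) * (\<Sum>k<n. a k * (2 * pi * \<i> * chi k))"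
      unfolding riesz_proj_def using i j ci by simp
    also have "\<dots> = (\<Sum>k<n. chi k * a k)"
      unfolding sum_distrib_left by (intro sum.cong refl) (simp add: field_simps)
    finally show "riesz_proj n c \<rho> M $$ (i,j) = Matrix.mat n n (\<lambda>(i,j). \<Sum>k<n.
      (if cmod (complex_of_real (mu k) - c) < \<rho> then 1 else 0) * V $$ (i,k) * cnj (V $$ (j,k))) $$ (i,j)"
      using i j unfolding chi_def a_def by (simp add: mult.assoc)
  qed (auto simp: riesz_proj_def)
qed

lemma powr_subadd: fixes a b s :: real assumes a: "0 \<le> a" and b: "0 \<le> b" and s: "0 \<le> s" "s \<le> 1"
  shows "(a + b) powr s \<le> a powr s + b powr s"
proof (cases "a + b = 0")
  case True then show ?thesis using a b by simp
next
  case False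
  hence ab: "0 < a + b" using a b by simp
  define t where "t = a / (a + b)"
  have t0: "0 \<le> t" and t1: "t \<le> 1" using a b ab by (auto simp: t_def field_simps)
  have 1: "t \<le> t powr s" using powr_mono'[OF s(2) t0 t1] t0 by simp
  have 2: "1 - t \<le> (1 - t) powr s" using powr_mono'[OF s(2), of "1 - t"] t0 t1 by simp
  have at: "a = t * (a + b)" and bt: "b = (1 - t) * (a + b)" using ab by (auto simp: t_def field_simps)
  have pa: "a powr s = t powr s * (a + b) powr s" using arg_cong[of _ _ "\<lambda>x. x powr s", OF at] by (simp add: powr_mult)
  have pb: "b powr s = (1 - t) powr s * (a + b) powr s" using arg_cong[of _ _ "\<lambda>x. x powr s", OF bt] by (simp add: powr_mult)
  have "a powr s + b powr s = (t powr s + (1 - t) powr s) * (a + b) powr s"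
    unfolding pa pb by (simp add: algebra_simps)
  moreover have "(t powr s + (1 - t) powr s) \<ge> 1" using 1 2 by simp
  moreover have "(a + b) powr s \<ge> 0" by simp
  ultimately show ?thesis by (metis mult_le_cancel_right1 order_trans_rules(23) powr_ge_zero mult.commute order.refl mult_right_mono)
qed

lemma powr_diff_le: fixes x y s :: real assumes x: "0 \<le> x" and y: "0 \<le> y" and s: "0 \<le> s" "s \<le> 1"
  shows "\<bar>x powr s - y powr s\<bar> \<le> \<bar>x - y\<bar> powr s"
proof -
  have *: "\<bar>u powr s - v powr s\<bar> \<le> \<bar>u - v\<bar> powr s" if uv: "0 \<le> v" "v \<le> u" for u v :: real
  proof -
    have "u powr s = ((u - v) + v) powr s" by simp
    also have "\<dots> \<le> (u - v) powr s + v powr s" using powr_subadd[of "u - v" v s] uv s by simp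
    finally have "u powr s - v powr s \<le> (u - v) powr s" by simp
    moreover have "v powr s \<le> u powr s" using powr_mono2[OF s(1) uv] .
    ultimately show ?thesis using uv by simp
  qed
  show ?thesis
  proof (cases "y \<le> x")
    case True then show ?thesis using *[OF y True] by simp
  next
    case False then show ?thesis using *[OF x, of y] by (simp add: abs_minus_commute)
  qed
qed

lemma scalar_key: fixes x y a D A s :: real
  assumes x: "0 \<le> x" and y: "0 \<le> y" and s: "0 < s" "s \<le> 1"
    and a: "0 \<le> a" "a \<le> A" and A: "1 \<le> A" and D: "\<bar>x - y\<bar> * a \<le> D"
  shows "\<bar>x powr s - y powr s\<bar> * a \<le> D powr s * A"
proof (cases "a = 0")
  case True then show ?thesis using A by simp
next
  case False
  hence a0: "0 < a" using a by simp
  have "\<bar>x powr s - y powr s\<bar> * a \<le> \<bar>x - y\<bar> powr s * a"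
    using powr_diff_le[OF x y _ s(2)] s a0 by (intro mult_right_mono) auto
  also have "\<bar>x - y\<bar> powr s * a = (\<bar>x - y\<bar> * a) powr s * a powr (1 - s)"
    using a0 by (simp add: powr_mult powr_diff field_simps powr_add[symmetric])
  also have "\<dots> \<le> D powr s * A powr (1 - s)"
    using D a0 s a by (intro mult_mono powr_mono2) auto
  also have "A powr (1 - s) \<le> A"
    using powr_mono[of "1 - s" 1 A] A s by simp
  hence "D powr s * A powr (1 - s) \<le> D powr s * A" by (intro mult_left_mono) auto
  finally show ?thesis .
qed

definition eb :: "nat \<Rightarrow> cmat \<Rightarrow> real \<Rightarrow> bool" where
  "eb n A K \<longleftrightarrow> (\<forall>i<n. \<forall>j<n. cmod (A $$ (i,j)) \<le> K)"

lemma ebD: "eb n A K \<Longrightarrow> i < n \<Longrightarrow> j < n \<Longrightarrow> cmod (A $$ (i,j)) \<le> K"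
  unfolding eb_def by auto

lemma eb_mono: "eb n A K \<Longrightarrow> K \<le> K' \<Longrightarrow> eb n A K'"
  unfolding eb_def by force

lemma sum_bound: fixes f g :: "nat \<Rightarrow> complex"
  assumes "\<And>l. l < n \<Longrightarrow> cmod (f l) \<le> K1" "\<And>l. l < n \<Longrightarrow> cmod (g l) \<le> K2"
  shows "cmod (\<Sum>l<n. f l * g l) \<le> real n * K1 * K2"
proof -
  have "cmod (\<Sum>l<n. f l * g l) \<le> (\<Sum>l<n. cmod (f l) * cmod (g l))"
    by (rule order_trans[OF norm_sum]) (simp add: norm_mult)
  also have "\<dots> \<le> (\<Sum>l<n. K1 * K2)"
  proof (rule sum_mono)
    fix l assume l: "l \<in> {..<n}"
    show "cmod (f l) * cmod (g l) \<le> K1 * K2"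
      using assms(1)[of l] assms(2)[of l] l by (intro mult_mono) (auto intro: order_trans[OF norm_ge_zero])
  qed
  finally show ?thesis by simp
qed

lemma eb_mult: assumes A: "A \<in> carrier_mat n n" and B: "B \<in> carrier_mat n n"
  and "eb n A K1" "eb n B K2" shows "eb n (A * B) (real n * K1 * K2)"
  unfolding eb_def
proof (intro allI impI)
  fix i j assume i: "i < n" and j: "j < n"
  show "cmod ((A * B) $$ (i,j)) \<le> real n * K1 * K2"
    unfolding mult_entry[OF A B i j] using assms(3,4) i j by (intro sum_bound) (auto simp: eb_def)
qed

lemma eb_adj: assumes "A \<in> carrier_mat n n" "eb n A K" shows "eb n (mat_adjoint A) K"
  using assms unfolding eb_def by auto

lemma eb_unitary: assumes "unitary_mat n U" shows "eb n U 1"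
  unfolding eb_def
proof (intro allI impI)
  fix i j assume i: "i < n" and j: "j < n"
  have "(\<Sum>k<n. cnj (U $$ (k,j)) * U $$ (k,j)) = 1" using unit_col[OF assms j j] by simp
  hence "(\<Sum>k<n. (cmod (U $$ (k,j)))\<^sup>2) = 1"
    by (metis (no_types, lifting) complex_norm_square mult.commute of_real_eq_1_iff of_real_sum sum.cong)
  moreover have "(cmod (U $$ (i,j)))\<^sup>2 \<le> (\<Sum>k<n. (cmod (U $$ (k,j)))\<^sup>2)"
    using i by (intro member_le_sum) auto
  ultimately have "(cmod (U $$ (i,j)))\<^sup>2 \<le> 1" by simp
  then show "cmod (U $$ (i,j)) \<le> 1" by (simp add: power_le_one_iff abs_le_square_iff)
qed

lemma mnorm_entry: assumes "i < n" "j < n" shows "cmod (A $$ (i,j)) \<le> mnorm n A"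
proof -
  have "(cmod (A $$ (i,j)))\<^sup>2 \<le> (\<Sum>j'<n. (cmod (A $$ (i,j')))\<^sup>2)"
    using assms by (intro member_le_sum) auto
  also have "\<dots> \<le> (\<Sum>i'<n. \<Sum>j'<n. (cmod (A $$ (i',j')))\<^sup>2)"
    using assms by (intro member_le_sum) (auto intro: sum_nonneg)
  finally show ?thesis unfolding mnorm_def by (simp add: real_le_rsqrt)
qed

lemma eb_mnorm: assumes "eb n A K" shows "mnorm n A \<le> real n * K"
proof (cases "n = 0")
  case True then show ?thesis by (simp add: mnorm_def)
next
  case False
  hence K: "0 \<le> K" using ebD[OF assms, of 0 0] by (meson norm_ge_zero order_trans neq0_conv)
  have "(\<Sum>i<n. \<Sum>j<n. (cmod (A $$ (i,j)))\<^sup>2) \<le> (\<Sum>i<n. \<Sum>j<n. K\<^sup>2)"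
    using ebD[OF assms] by (intro sum_mono power_mono) auto
  also have "\<dots> = (real n * K)\<^sup>2" by (simp add: power2_eq_square)
  finally show ?thesis unfolding mnorm_def using K by (intro real_le_lsqrt) auto
qed

lemma sum_bound2: fixes h :: "nat \<Rightarrow> complex"
  assumes "\<And>l. l < n \<Longrightarrow> cmod (h l) \<le> K"
  shows "cmod (\<Sum>l<n. h l) \<le> real n * K"
proof -
  have "cmod (\<Sum>l<n. h l) \<le> (\<Sum>l<n. cmod (h l))" by (rule norm_sum)
  also have "\<dots> \<le> (\<Sum>l<n. K)" using assms by (intro sum_mono) auto
  finally show ?thesis by simp
qed

lemma GL_right:
  assumes U: "unitary_mat n U" and X: "X = U * Lambda n x * mat_adjoint U"
    and G: "G \<in> carrier_mat n n" and XG: "X * G = X" and x: "\<forall>i<n. 0 \<le> x i"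
  shows "(U * Lambda n (\<lambda>i. x i powr s) * mat_adjoint U) * G = U * Lambda n (\<lambda>i. x i powr s) * mat_adjoint U"
proof -
  have Uc: "U \<in> carrier_mat n n" using U unitary_carrier by auto
  have aUc: "mat_adjoint U \<in> carrier_mat n n" using Uc by simp
  have aUG: "mat_adjoint U * G \<in> carrier_mat n n" using aUc G by simp
  have Xc: "X \<in> carrier_mat n n" unfolding X by (rule mult_carrier_mat[OF mult_carrier_mat[OF Uc Lambda_carrier] aUc])
  have "Lambda n x * (mat_adjoint U * G) = (mat_adjoint U * X) * G"
    unfolding spec_UA[OF U X] using Uc aUc G by (simp add: assoc_dims)
  also have "\<dots> = mat_adjoint U * (X * G)" using Uc aUc Xc G by (simp add: assoc_dims)
  also have "\<dots> = Lambda n x * mat_adjoint U" unfolding XG spec_UA[OF U X] ..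
  finally have eq: "Lambda n x * (mat_adjoint U * G) = Lambda n x * mat_adjoint U" .
  have eq2: "Lambda n (\<lambda>i. x i powr s) * (mat_adjoint U * G) = Lambda n (\<lambda>i. x i powr s) * mat_adjoint U"
  proof (rule eq_matI)
    fix k j assume "k < dim_row (Lambda n (\<lambda>i. x i powr s) * mat_adjoint U)" "j < dim_col (Lambda n (\<lambda>i. x i powr s) * mat_adjoint U)"
    hence k: "k < n" and j: "j < n" using Uc by auto
    have e: "x k * (mat_adjoint U * G) $$ (k,j) = x k * mat_adjoint U $$ (k,j)"
      using arg_cong[OF eq, of "\<lambda>A. A $$ (k,j)"] diag_entry_left[OF aUG k j] diag_entry_left[OF aUc k j] by simp
    show "(Lambda n (\<lambda>i. x i powr s) * (mat_adjoint U * G)) $$ (k,j) = (Lambda n (\<lambda>i. x i powr s) * mat_adjoint U) $$ (k,j)"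
    proof (cases "x k = 0")
      case True then show ?thesis using diag_entry_left[OF aUG k j] diag_entry_left[OF aUc k j] by simp
    next
      case False
      then have "(mat_adjoint U * G) $$ (k,j) = mat_adjoint U $$ (k,j)" using e by simp
      then show ?thesis using diag_entry_left[OF aUG k j] diag_entry_left[OF aUc k j] by simp
    qed
  qed (insert Uc G, auto)
  have "(U * Lambda n (\<lambda>i. x i powr s) * mat_adjoint U) * G = U * (Lambda n (\<lambda>i. x i powr s) * (mat_adjoint U * G))"
    using Uc G by (simp add: assoc_dims)
  also have "\<dots> = U * Lambda n (\<lambda>i. x i powr s) * mat_adjoint U" unfolding eq2 using Uc by (simp add: assoc_dims)
  finally show ?thesis .
qed

lemma GL_left:
  assumes U: "unitary_mat n U" and X: "X = U * Lambda n x * mat_adjoint U"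
    and G: "G \<in> carrier_mat n n" and GX: "G * X = X" and x: "\<forall>i<n. 0 \<le> x i"
  shows "G * (U * Lambda n (\<lambda>i. x i powr s) * mat_adjoint U) = U * Lambda n (\<lambda>i. x i powr s) * mat_adjoint U"
proof -
  have Uc: "U \<in> carrier_mat n n" using U unitary_carrier by auto
  have aUc: "mat_adjoint U \<in> carrier_mat n n" using Uc by simp
  have GU: "G * U \<in> carrier_mat n n" using Uc G by simp
  have Xc: "X \<in> carrier_mat n n" unfolding X by (rule mult_carrier_mat[OF mult_carrier_mat[OF Uc Lambda_carrier] aUc])
  have "(G * U) * Lambda n x = G * (X * U)"
    unfolding spec_AU[OF U X] using Uc G by (simp add: assoc_dims)
  also have "\<dots> = (G * X) * U" using Uc Xc G by (simp add: assoc_dims)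
  also have "\<dots> = U * Lambda n x" unfolding GX spec_AU[OF U X] ..
  finally have eq: "(G * U) * Lambda n x = U * Lambda n x" .
  have eq2: "(G * U) * Lambda n (\<lambda>i. x i powr s) = U * Lambda n (\<lambda>i. x i powr s)"
  proof (rule eq_matI)
    fix i k assume "i < dim_row (U * Lambda n (\<lambda>i. x i powr s))" "k < dim_col (U * Lambda n (\<lambda>i. x i powr s))"
    hence i: "i < n" and k: "k < n" using Uc by auto
    have e: "(G * U) $$ (i,k) * x k = U $$ (i,k) * x k"
      using arg_cong[OF eq, of "\<lambda>A. A $$ (i,k)"] diag_entry_right[OF GU i k] diag_entry_right[OF Uc i k] by simp
    show "((G * U) * Lambda n (\<lambda>i. x i powr s)) $$ (i,k) = (U * Lambda n (\<lambda>i. x i powr s)) $$ (i,k)"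
    proof (cases "x k = 0")
      case True then show ?thesis using diag_entry_right[OF GU i k] diag_entry_right[OF Uc i k] by simp
    next
      case False
      then have "(G * U) $$ (i,k) = U $$ (i,k)" using e by simp
      then show ?thesis using diag_entry_right[OF GU i k] diag_entry_right[OF Uc i k] by simp
    qed
  qed (insert Uc G, auto)
  have "G * (U * Lambda n (\<lambda>i. x i powr s) * mat_adjoint U) = ((G * U) * Lambda n (\<lambda>i. x i powr s)) * mat_adjoint U"
    using Uc G by (simp add: assoc_dims)
  also have "\<dots> = U * Lambda n (\<lambda>i. x i powr s) * mat_adjoint U" unfolding eq2 ..
  finally show ?thesis .
qed

lemma eig_diag: assumes U: "unitary_mat n U" and X: "X = U * Lambda n x * mat_adjoint U" and k: "k < n"
  shows "(mat_adjoint U * X * U) $$ (k,k) = complex_of_real (x k)"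
proof -
  have Uc: "U \<in> carrier_mat n n" using U unitary_carrier by auto
  have "mat_adjoint U * X * U = Lambda n x * (mat_adjoint U * U)" unfolding spec_UA[OF U X] using Uc by (simp add: assoc_dims)
  also have "mat_adjoint U * U = 1\<^sub>m n" using U unfolding unitary_mat_def by auto
  finally show ?thesis using k by (simp add: Lambda_index)
qed

locale setting =
  fixes n l :: nat and bp :: "nat \<Rightarrow> real" and c :: complex and \<rho> g b s :: real
    and E Z V :: cmat and mu :: "nat \<Rightarrow> real"
  assumes gap1: "\<forall>i<l. \<rho> + g \<le> cmod (complex_of_real (bp i) - c)"
    and gap2: "g \<le> \<rho> - cmod c" and gpos: "0 < g" and rpos: "0 < \<rho>"
    and Eh: "hermitian_mat n E" and Zp: "psd_mat n Z"
    and ZK: "\<forall>v \<in> carrier_vec n. Lambda n (\<lambda>i. if i < l then bp i else 0) *\<^sub>v (Z *\<^sub>v v) = 0\<^sub>v n"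
    and noeig: "\<forall>z \<in> sphere c \<rho>. \<not> eigenvalue (Lambda n (\<lambda>i. if i < l then bp i else 0) + E) z"
    and bpos: "0 < b" and b1: "b \<le> 1" and Eb: "mnorm n E \<le> b" and Zb: "mnorm n Z \<le> b"
    and spos: "0 < s" and s1: "s \<le> 1"
    and V: "unitary_mat n V"
    and Mdec: "Lambda n (\<lambda>i. if i < l then bp i else 0) + E = V * Lambda n mu * mat_adjoint V"
begin

definition al where "al = (\<lambda>i. if i < l then bp i else 0)"
definition M where "M = Lambda n al + E"
definition chi where "chi k = (if cmod (complex_of_real (mu k) - c) < \<rho> then 1 else (0::complex))"
definition Q where "Q = riesz_proj n c \<rho> M"
definition N where "N = real n"
definition K0 where "K0 = N / g"

lemma Vc: "V \<in> carrier_mat n n" using V unitary_carrier by auto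
lemma Ec: "E \<in> carrier_mat n n" using Eh unfolding hermitian_mat_def by auto
lemma Zc: "Z \<in> carrier_mat n n" using Zp unfolding psd_mat_def hermitian_mat_def by auto
lemma Mc: "M \<in> carrier_mat n n" unfolding M_def using Ec by simp
lemma Mdec': "M = V * Lambda n mu * mat_adjoint V" unfolding M_def al_def using Mdec .
lemma N0: "0 \<le> N" unfolding N_def by simp
lemma K00: "0 \<le> K0" unfolding K0_def using N0 gpos by simp

lemma ebE: "eb n E b" unfolding eb_def using mnorm_entry Eb by (meson order_trans)
lemma ebZ: "eb n Z b" unfolding eb_def using mnorm_entry Zb by (meson order_trans)
lemma ebV: "eb n V 1" using eb_unitary[OF V] .

lemma eigeq: assumes i: "i < n" and k: "k < n"
  shows "(complex_of_real (mu k) - complex_of_real (al i)) * V $$ (i,k) = (E * V) $$ (i,k)"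
proof -
  have "(M * V) $$ (i,k) = V $$ (i,k) * mu k"
    unfolding spec_AU[OF V Mdec'] using diag_entry_right[OF Vc i k] by simp
  moreover have "M * V = Lambda n al * V + E * V"
    unfolding M_def by (rule add_mult_distrib_mat[OF Lambda_carrier Ec Vc])
  hence "(M * V) $$ (i,k) = al i * V $$ (i,k) + (E * V) $$ (i,k)"
    using diag_entry_left[OF Vc i k] i k Vc Ec by simp
  ultimately show ?thesis by (simp add: algebra_simps)
qed

lemma EVb: assumes i: "i < n" and k: "k < n" shows "cmod ((E * V) $$ (i,k)) \<le> N * b"
  using ebD[OF eb_mult[OF Ec Vc ebE ebV] i k] unfolding N_def by simp

lemma offblock: assumes i: "i < n" and k: "k < n"
  and off: "(i < l \<and> chi k = 1) \<or> (l \<le> i \<and> chi k = 0)"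
  shows "cmod (V $$ (i,k)) \<le> K0 * b"
proof -
  have gap: "g \<le> cmod (complex_of_real (mu k) - complex_of_real (al i))"
  proof (cases "i < l")
    case True
    with off have "chi k = 1" by auto
    hence in1: "cmod (complex_of_real (mu k) - c) < \<rho>" unfolding chi_def by (auto split: if_splits)
    have "cmod (complex_of_real (bp i) - c) \<le> cmod (complex_of_real (bp i) - complex_of_real (mu k)) + cmod (complex_of_real (mu k) - c)"
      by (rule order_trans[OF _ norm_triangle_ineq]) simp
    then show ?thesis using gap1 True in1 unfolding al_def by (auto simp: norm_minus_commute)
  next
    case False
    with off have "chi k = 0" by auto
    hence out: "\<rho> \<le> cmod (complex_of_real (mu k) - c)" unfolding chi_def by (auto split: if_splits)
    have "cmod (complex_of_real (mu k) - c) \<le> cmod (complex_of_real (mu k)) + cmod c" by (rule norm_triangle_ineq4)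
    then show ?thesis using gap2 False out unfolding al_def by auto
  qed
  have "cmod (complex_of_real (mu k) - complex_of_real (al i)) * cmod (V $$ (i,k)) \<le> N * b"
  proof -
    have "cmod ((complex_of_real (mu k) - complex_of_real (al i)) * V $$ (i,k)) \<le> N * b"
      using EVb[OF i k] eigeq[OF i k] by simp
    thus ?thesis by (simp add: norm_mult)
  qed
  hence "g * cmod (V $$ (i,k)) \<le> N * b" using gap by (meson mult_right_mono norm_ge_zero order_trans)
  thus ?thesis unfolding K0_def using gpos by (simp add: field_simps mult.commute)
qed

lemma Q_eq: "Q = V * mat_diag n chi * mat_adjoint V"
proof -
  have "Q = Matrix.mat n n (\<lambda>(i,j). \<Sum>k<n.
      (if cmod (complex_of_real (mu k) - c) < \<rho> then 1 else 0) * V $$ (i,k) * cnj (V $$ (j,k)))"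
    unfolding Q_def by (rule riesz_formula[OF V Mdec' _ rpos]) (use noeig in \<open>simp add: al_def M_def\<close>)
  also have "\<dots> = V * mat_diag n chi * mat_adjoint V"
  proof (rule eq_matI)
    fix i j assume "i < dim_row (V * mat_diag n chi * mat_adjoint V)" "j < dim_col (V * mat_diag n chi * mat_adjoint V)"
    hence i: "i < n" and j: "j < n" using Vc by auto
    show "Matrix.mat n n (\<lambda>(i,j). \<Sum>k<n.
      (if cmod (complex_of_real (mu k) - c) < \<rho> then 1 else 0) * V $$ (i,k) * cnj (V $$ (j,k))) $$ (i,j) =
      (V * mat_diag n chi * mat_adjoint V) $$ (i,j)"
      unfolding FD_entry[OF Vc i j] using i j by (auto simp: chi_def intro!: sum.cong)
  qed (use Vc in auto)
  finally show ?thesis .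
qed

lemma Qc: "Q \<in> carrier_mat n n" unfolding Q_eq by (rule mult_carrier_mat[OF mult_carrier_mat[OF Vc mat_diag_dim] adj_carrier[OF Vc]])

lemma Q_entry: "i < n \<Longrightarrow> j < n \<Longrightarrow> Q $$ (i,j) = (\<Sum>k<n. V $$ (i,k) * chi k * cnj (V $$ (j,k)))"
  unfolding Q_eq by (rule FD_entry[OF Vc])

lemma chi01: "chi k = 0 \<or> chi k = 1" unfolding chi_def by auto
lemma chi_norm: "cmod (chi k) \<le> 1" unfolding chi_def by auto

lemma IQ_entry: assumes i: "i < n" and j: "j < n"
  shows "(if i = j then 1 else 0) - Q $$ (i,j) = (\<Sum>k<n. V $$ (i,k) * (1 - chi k) * cnj (V $$ (j,k)))"
  unfolding Q_entry[OF i j] unit_row[OF V i j, symmetric]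
  by (simp add: sum_subtractf[symmetric] algebra_simps)

lemma Qa: assumes i: "i < n" and j: "j < n" shows "cmod (Q $$ (i,j)) \<le> N"
proof -
  have "cmod (Q $$ (i,j)) \<le> real n * 1"
    unfolding Q_entry[OF i j] using ebD[OF ebV] i j chi_norm
    by (intro sum_bound2) (auto simp: norm_mult intro!: mult_le_one)
  thus ?thesis unfolding N_def by simp
qed


lemma Vle1: "i < n \<Longrightarrow> k < n \<Longrightarrow> cmod (V $$ (i,k)) \<le> 1" using ebD[OF ebV] .

lemma Qb: assumes i: "i < n" and j: "j < n" and il: "i < l" shows "cmod (Q $$ (i,j)) \<le> N * (K0 * b)"
  unfolding Q_entry[OF i j] N_def
proof (rule sum_bound2)
  fix k assume k: "k < n"
  show "cmod (V $$ (i,k) * chi k * cnj (V $$ (j,k))) \<le> K0 * b"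
  proof (cases "chi k = 0")
    case True then show ?thesis using K00 bpos by simp
  next
    case False
    hence "chi k = 1" using chi01 by auto
    hence "cmod (V $$ (i,k)) \<le> K0 * b" using offblock[OF i k] il by auto
    moreover have "cmod (V $$ (j,k)) \<le> 1" using Vle1[OF j k] .
    ultimately show ?thesis using `chi k = 1` by (simp add: norm_mult) (metis mult_left_le norm_ge_zero order_trans)
  qed
qed

lemma Qb': assumes i: "i < n" and j: "j < n" and jl: "j < l" shows "cmod (Q $$ (i,j)) \<le> N * (K0 * b)"
  unfolding Q_entry[OF i j] N_def
proof (rule sum_bound2)
  fix k assume k: "k < n"
  show "cmod (V $$ (i,k) * chi k * cnj (V $$ (j,k))) \<le> K0 * b"
  proof (cases "chi k = 0")
    case True then show ?thesis using K00 bpos by simp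
  next
    case False
    hence "chi k = 1" using chi01 by auto
    hence "cmod (V $$ (j,k)) \<le> K0 * b" using offblock[OF j k] jl by auto
    moreover have "cmod (V $$ (i,k)) \<le> 1" using Vle1[OF i k] .
    ultimately show ?thesis using `chi k = 1` by (simp add: norm_mult) (metis mult_right_le_one_le norm_ge_zero order_trans mult.commute mult_left_le)
  qed
qed

lemma Qc1: assumes i: "i < n" and j: "j < n" and il: "l \<le> i"
  shows "cmod ((if i = j then 1 else 0) - Q $$ (i,j)) \<le> N * (K0 * b)"
  unfolding IQ_entry[OF i j] N_def
proof (rule sum_bound2)
  fix k assume k: "k < n"
  show "cmod (V $$ (i,k) * (1 - chi k) * cnj (V $$ (j,k))) \<le> K0 * b"
  proof (cases "chi k = 1")
    case True then show ?thesis using K00 bpos by simp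
  next
    case False
    hence "chi k = 0" using chi01 by auto
    hence "cmod (V $$ (i,k)) \<le> K0 * b" using offblock[OF i k] il by auto
    moreover have "cmod (V $$ (j,k)) \<le> 1" using Vle1[OF j k] .
    ultimately show ?thesis using `chi k = 0` by (simp add: norm_mult) (metis mult_left_le norm_ge_zero order_trans)
  qed
qed

lemma Qc2: assumes i: "i < n" and j: "j < n" and il: "l \<le> i" and jl: "l \<le> j"
  shows "cmod ((if i = j then 1 else 0) - Q $$ (i,j)) \<le> N * (K0 * b) ^ 2"
  unfolding IQ_entry[OF i j] N_def
proof (rule sum_bound2)
  fix k assume k: "k < n"
  show "cmod (V $$ (i,k) * (1 - chi k) * cnj (V $$ (j,k))) \<le> (K0 * b) ^ 2"
  proof (cases "chi k = 1")
    case True then show ?thesis using K00 bpos by simp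
  next
    case False
    hence "chi k = 0" using chi01 by auto
    hence "cmod (V $$ (i,k)) \<le> K0 * b" "cmod (V $$ (j,k)) \<le> K0 * b" using offblock[OF i k] offblock[OF j k] il jl by auto
    then show ?thesis using `chi k = 0` by (simp add: norm_mult power2_eq_square) (rule mult_mono, use K00 bpos in auto)
  qed
qed

lemma chi_sq: "chi k * chi k = chi k" using chi01[of k] by auto

lemma QQ: "Q * Q = Q" unfolding Q_eq FD_mult[OF V] chi_sq ..

lemma Q_adj: "mat_adjoint Q = Q"
proof (rule eq_matI)
  fix i j assume "i < dim_row Q" "j < dim_col Q"
  hence i: "i < n" and j: "j < n" using Qc by auto
  have "cnj (chi k) = chi k" for k using chi01[of k] by auto
  then show "mat_adjoint Q $$ (i,j) = Q $$ (i,j)" using i j Qc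
    by (simp add: Q_entry mult.commute mult.left_commute)
qed (use Qc in auto)

lemma Qh: "hermitian_mat n Q" unfolding hermitian_mat_def using Qc Q_adj by auto

lemma al_nz: "i < l \<Longrightarrow> al i \<noteq> 0"
proof
  assume i: "i < l" and z: "al i = 0"
  hence "bp i = 0" unfolding al_def by simp
  moreover have "\<rho> + g \<le> cmod (complex_of_real (bp i) - c)" using gap1 i by simp
  ultimately have "\<rho> + g \<le> cmod c" by simp
  thus False using gap2 gpos rpos by simp
qed

lemma Z0: assumes i: "i < n" and j: "j < n" and il: "i < l" shows "Z $$ (i,j) = 0"
proof -
  have "Lambda n al *\<^sub>v (Z *\<^sub>v unit_vec n j) = 0\<^sub>v n" using ZK unfolding al_def by auto
  hence "(Lambda n al *\<^sub>v (Z *\<^sub>v unit_vec n j)) $ i = 0" using i by simp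
  moreover have "(Lambda n al *\<^sub>v (Z *\<^sub>v unit_vec n j)) $ i = (Lambda n al * Z) $$ (i,j)"
  proof -
    have "Z *\<^sub>v unit_vec n j = col Z j"
    proof (rule eq_vecI)
      fix i assume "i < dim_vec (col Z j)"
      hence i: "i < n" using Zc by simp
      have "(Z *\<^sub>v unit_vec n j) $ i = row Z i \<bullet> unit_vec n j" using Zc i by simp
      also have "\<dots> = Z $$ (i,j)" using Zc i j by (simp add: scalar_prod_right_unit)
      finally show "(Z *\<^sub>v unit_vec n j) $ i = col Z j $ i" using Zc i j by simp
    qed (use Zc in simp)
    hence "Lambda n al *\<^sub>v (Z *\<^sub>v unit_vec n j) = col (Lambda n al * Z) j" using Zc j
      by (simp add: col_mult2[of _ n n Z n j])
    then show ?thesis using i j Zc by simp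
  qed
  moreover have "(Lambda n al * Z) $$ (i,j) = al i * Z $$ (i,j)" using diag_entry_left[OF Zc i j] .
  ultimately show ?thesis using al_nz[OF il] by simp
qed

lemma Z0': assumes i: "i < n" and j: "j < n" and jl: "j < l" shows "Z $$ (i,j) = 0"
proof -
  have "Z $$ (i,j) = cnj (Z $$ (j,i))" using hermitian_entry[OF _ i j] Zp unfolding psd_mat_def by auto
  then show ?thesis using Z0[OF j i jl] by simp
qed

definition pv where "pv i = (if i < l then 0 else 1::real)"
definition P where "P = Lambda n pv"
lemma Pc: "P \<in> carrier_mat n n" unfolding P_def by simp

lemma PZ: "P * Z = Z"
proof (rule eq_matI)
  fix i j assume "i < dim_row Z" "j < dim_col Z"
  hence i: "i < n" and j: "j < n" using Zc by auto
  show "(P * Z) $$ (i,j) = Z $$ (i,j)" unfolding P_def diag_entry_left[OF Zc i j]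
    using Z0[OF i j] by (auto simp: pv_def)
qed (use Zc Pc in auto)

lemma ZP: "Z * P = Z"
proof (rule eq_matI)
  fix i j assume "i < dim_row Z" "j < dim_col Z"
  hence i: "i < n" and j: "j < n" using Zc by auto
  show "(Z * P) $$ (i,j) = Z $$ (i,j)" unfolding P_def diag_entry_right[OF Zc i j]
    using Z0'[OF i j] by (auto simp: pv_def)
qed (use Zc Pc in auto)


lemma herm_sprod: assumes H: "hermitian_mat n H" and v: "v \<in> carrier_vec n" and w: "w \<in> carrier_vec n"
  shows "scalar_prod (conjugate v) (H *\<^sub>v w) = scalar_prod (conjugate (H *\<^sub>v v)) w"
proof -
  have Hc: "H \<in> carrier_mat n n" using H unfolding hermitian_mat_def by auto
  have "scalar_prod (conjugate v) (H *\<^sub>v w) = (\<Sum>i<n. cnj (v $ i) * (\<Sum>j<n. H $$ (i,j) * w $ j))"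
    using Hc v w by (simp add: scalar_prod_def atLeast0LessThan)
  also have "\<dots> = (\<Sum>i<n. \<Sum>j<n. cnj (v $ i) * H $$ (i,j) * w $ j)"
    by (simp add: sum_distrib_left mult.assoc)
  also have "\<dots> = (\<Sum>j<n. \<Sum>i<n. cnj (v $ i) * H $$ (i,j) * w $ j)" by (rule sum.swap)
  also have "\<dots> = (\<Sum>j<n. cnj (\<Sum>i<n. H $$ (j,i) * v $ i) * w $ j)"
    unfolding cnj_sum sum_distrib_right
  proof (intro sum.cong refl)
    fix j i assume j: "j \<in> {..<n}" and i: "i \<in> {..<n}"
    have "H $$ (i,j) = cnj (H $$ (j,i))" using hermitian_entry[OF H, of i j] i j by simp
    then show "cnj (v $ i) * H $$ (i,j) * w $ j = cnj (H $$ (j,i) * v $ i) * w $ j" by simp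
  qed
  also have "\<dots> = scalar_prod (conjugate (H *\<^sub>v v)) w"
    using Hc v w by (simp add: scalar_prod_def atLeast0LessThan)
  finally show ?thesis .
qed

definition X where "X = Q * Z * Q"
lemma Xc: "X \<in> carrier_mat n n" unfolding X_def using Qc Zc by simp

lemma Zh: "hermitian_mat n Z" using Zp unfolding psd_mat_def by auto

lemma Xpsd: "psd_mat n X"
proof -
  have Za: "mat_adjoint Z = Z" using Zh unfolding hermitian_mat_def by auto
  have "mat_adjoint X = mat_adjoint Q * mat_adjoint (Q * Z)"
    unfolding X_def by (rule adj_mult[OF mult_carrier_mat[OF Qc Zc] Qc])
  also have "mat_adjoint (Q * Z) = mat_adjoint Z * mat_adjoint Q" by (rule adj_mult[OF Qc Zc])
  finally have "mat_adjoint X = X" unfolding X_def Q_adj Za using Qc Zc by (simp add: assoc_dims)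
  hence XH: "hermitian_mat n X" unfolding hermitian_mat_def using Xc by simp
  have "0 \<le> Re (scalar_prod (conjugate v) (X *\<^sub>v v))" if v: "v \<in> carrier_vec n" for v
  proof -
    have Qv: "Q *\<^sub>v v \<in> carrier_vec n" using Qc v by simp
    have "X *\<^sub>v v = Q *\<^sub>v (Z *\<^sub>v (Q *\<^sub>v v))"
      unfolding X_def using Qc Zc v by (simp add: assoc_mult_mat_vec[of _ n n _ n])
    hence "scalar_prod (conjugate v) (X *\<^sub>v v) = scalar_prod (conjugate (Q *\<^sub>v v)) (Z *\<^sub>v (Q *\<^sub>v v))"
      using herm_sprod[OF Qh v, of "Z *\<^sub>v (Q *\<^sub>v v)"] Zc Qv by simp
    moreover have "0 \<le> Re (scalar_prod (conjugate (Q *\<^sub>v v)) (Z *\<^sub>v (Q *\<^sub>v v)))"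
      using Zp Qv unfolding psd_mat_def by blast
    ultimately show ?thesis by simp
  qed
  then show ?thesis unfolding psd_mat_def using XH by blast
qed

lemma XQ: "X * Q = X"
proof -
  have "X * Q = Q * Z * (Q * Q)" unfolding X_def using Qc Zc by (simp add: assoc_dims)
  then show ?thesis unfolding QQ X_def .
qed

end

definition Cfun :: "nat \<Rightarrow> real \<Rightarrow> real \<Rightarrow> real" where
  "Cfun n g s = real n * (2 * (real n ^ 4 * (real n / g) * (real n ^ 6 + real n ^ 2) powr s)
      + real n ^ 2 * (real n ^ 4 + 1) * (real n ^ 6 * (real n / g) ^ 2) powr s)"

lemma alg_a1: "(N::real) * (N * 1 * (N * (N * N * b) * (N * (K0 * b)^2))) * 1 = (N^6 * K0^2) * b^3"
  by (simp add: eval_nat_numeral ac_simps)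
lemma alg_a2: "(N::real) * (N^2 * Kp * bs) * (N * (K0 * b)) + N * (N * (K0 * b)) * (N^2 * Kp * bs) = (2 * (N ^ 4 * K0 * Kp)) * (b * bs)"
  by (simp add: eval_nat_numeral ac_simps)
lemma alg_a3: "(N::real) * (N * 1 * (Dp * bt * (N * (N * 1 * (N * N * 1)) * 1 + 1))) * 1 = (N ^ 2 * (N ^ 4 + 1) * Dp) * bt"
  by (simp add: eval_nat_numeral algebra_simps)

lemma minus_entry: "(B::cmat) \<in> carrier_mat n n \<Longrightarrow> i < n \<Longrightarrow> j < n \<Longrightarrow> (A - B) $$ (i,j) = A $$ (i,j) - B $$ (i,j)"
  by (rule index_minus_mat(1)) auto

context setting begin
lemma ebQ: "eb n Q N" unfolding eb_def using Qa by auto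
lemma ebP: "eb n P 1" unfolding eb_def P_def by (auto simp: Lambda_index pv_def)
lemma P_entry: "i < n \<Longrightarrow> j < n \<Longrightarrow> P $$ (i,j) = (if i = j then complex_of_real (pv i) else 0)"
  unfolding P_def by (simp add: Lambda_index)
end

locale setting2 = setting +
  fixes U W :: cmat and x y :: "nat \<Rightarrow> real"
  assumes U: "unitary_mat n U" and xnn: "\<forall>i<n. 0 \<le> x i" and Xdec: "X = U * Lambda n x * mat_adjoint U"
    and W: "unitary_mat n W" and ynn: "\<forall>i<n. 0 \<le> y i" and Zdec: "Z = W * Lambda n y * mat_adjoint W"
begin

definition Xs where "Xs = U * Lambda n (\<lambda>i. x i powr s) * mat_adjoint U"
definition Zs where "Zs = W * Lambda n (\<lambda>i. y i powr s) * mat_adjoint W"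
definition KX where "KX = N ^ 6 + N ^ 2"
definition T0 where "T0 = Q * P"
definition phi where "phi = mat_adjoint U * T0 * W"

lemma Uc: "U \<in> carrier_mat n n" using U unitary_carrier by auto
lemma Wc: "W \<in> carrier_mat n n" using W unitary_carrier by auto
lemma Xsc: "Xs \<in> carrier_mat n n" unfolding Xs_def by (rule mult_carrier_mat[OF mult_carrier_mat[OF Uc Lambda_carrier] adj_carrier[OF Uc]])
lemma Zsc: "Zs \<in> carrier_mat n n" unfolding Zs_def by (rule mult_carrier_mat[OF mult_carrier_mat[OF Wc Lambda_carrier] adj_carrier[OF Wc]])
lemma T0c: "T0 \<in> carrier_mat n n" unfolding T0_def using Qc Pc by simp
lemma phic: "phi \<in> carrier_mat n n" unfolding phi_def by (rule mult_carrier_mat[OF mult_carrier_mat[OF adj_carrier[OF Uc] T0c] Wc])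
lemma KX0: "0 \<le> KX" unfolding KX_def using N0 by simp

lemma xb: assumes k: "k < n" shows "x k \<le> KX * b"
proof -
  have e1: "eb n (Q * Z) (N * N * b)" using eb_mult[OF Qc Zc ebQ ebZ] unfolding N_def by simp
  have e2: "eb n X (N * (N * N * b) * N)" unfolding X_def using eb_mult[OF mult_carrier_mat[OF Qc Zc] Qc e1 ebQ] unfolding N_def by simp
  have aUc: "mat_adjoint U \<in> carrier_mat n n" using Uc by simp
  have e3: "eb n (mat_adjoint U * X) (N * 1 * (N * (N * N * b) * N))"
    using eb_mult[OF aUc Xc eb_adj[OF Uc eb_unitary[OF U]] e2] unfolding N_def by simp
  have e4: "eb n (mat_adjoint U * X * U) (N * (N * 1 * (N * (N * N * b) * N)) * 1)"
    using eb_mult[OF mult_carrier_mat[OF aUc Xc] Uc e3 eb_unitary[OF U]] unfolding N_def by simp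
  have "cmod (complex_of_real (x k)) \<le> N * (N * 1 * (N * (N * N * b) * N)) * 1"
    using ebD[OF e4 k k] eig_diag[OF U Xdec k] by simp
  hence "x k \<le> N ^ 6 * b" by (simp add: power_def eval_nat_numeral algebra_simps)
  also have "\<dots> \<le> KX * b" unfolding KX_def using bpos N0 by (intro mult_right_mono) auto
  finally show ?thesis .
qed

lemma yb: assumes k: "k < n" shows "y k \<le> KX * b"
proof -
  have aWc: "mat_adjoint W \<in> carrier_mat n n" using Wc by simp
  have e3: "eb n (mat_adjoint W * Z) (N * 1 * b)"
    using eb_mult[OF aWc Zc eb_adj[OF Wc eb_unitary[OF W]] ebZ] unfolding N_def by simp
  have e4: "eb n (mat_adjoint W * Z * W) (N * (N * 1 * b) * 1)"
    using eb_mult[OF mult_carrier_mat[OF aWc Zc] Wc e3 eb_unitary[OF W]] unfolding N_def by simp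
  have "cmod (complex_of_real (y k)) \<le> N * (N * 1 * b) * 1"
    using ebD[OF e4 k k] eig_diag[OF W Zdec k] by simp
  hence "y k \<le> N ^ 2 * b" by (simp add: power2_eq_square algebra_simps)
  also have "\<dots> \<le> KX * b" unfolding KX_def using bpos N0 by (intro mult_right_mono) auto
  finally show ?thesis .
qed

lemma XsQ: "Xs * Q = Xs" unfolding Xs_def by (rule GL_right[OF U Xdec Qc XQ xnn])
lemma PZs: "P * Zs = Zs" unfolding Zs_def by (rule GL_left[OF W Zdec Pc PZ ynn])

definition Ks where "Ks = N ^ 2 * (KX * b) powr s"

lemma eb_diagpow: assumes "\<forall>i<n. 0 \<le> z i \<and> z i \<le> KX * b"
  shows "eb n (Lambda n (\<lambda>i. z i powr s)) ((KX * b) powr s)"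
  unfolding eb_def using assms spos by (auto simp: Lambda_index intro: powr_mono2)

lemma ebXs: "eb n Xs Ks"
proof -
  have d: "eb n (Lambda n (\<lambda>i. x i powr s)) ((KX * b) powr s)" using xb xnn by (intro eb_diagpow) auto
  have e1: "eb n (U * Lambda n (\<lambda>i. x i powr s)) (N * 1 * (KX * b) powr s)"
    using eb_mult[OF Uc Lambda_carrier eb_unitary[OF U] d] unfolding N_def by simp
  have "eb n Xs (N * (N * 1 * (KX * b) powr s) * 1)" unfolding Xs_def
    using eb_mult[OF mult_carrier_mat[OF Uc Lambda_carrier] adj_carrier[OF Uc] e1 eb_adj[OF Uc eb_unitary[OF U]]] unfolding N_def by simp
  then show ?thesis unfolding Ks_def by (simp add: power2_eq_square mult.assoc)
qed

lemma ebZs: "eb n Zs Ks"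
proof -
  have d: "eb n (Lambda n (\<lambda>i. y i powr s)) ((KX * b) powr s)" using yb ynn by (intro eb_diagpow) auto
  have e1: "eb n (W * Lambda n (\<lambda>i. y i powr s)) (N * 1 * (KX * b) powr s)"
    using eb_mult[OF Wc Lambda_carrier eb_unitary[OF W] d] unfolding N_def by simp
  have "eb n Zs (N * (N * 1 * (KX * b) powr s) * 1)" unfolding Zs_def
    using eb_mult[OF mult_carrier_mat[OF Wc Lambda_carrier] adj_carrier[OF Wc] e1 eb_adj[OF Wc eb_unitary[OF W]]] unfolding N_def by simp
  then show ?thesis unfolding Ks_def by (simp add: power2_eq_square mult.assoc)
qed

lemma term1: assumes i: "i < n" and j: "j < n"
  shows "cmod (Xs $$ (i,j) - (Xs * T0) $$ (i,j)) \<le> N * Ks * (N * (K0 * b))"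
proof -
  have XT: "Xs * T0 = Xs * P" unfolding T0_def using assoc_mult_mat[OF Xsc Qc Pc, symmetric] XsQ by simp
  have "(Xs * P) $$ (i,j) = Xs $$ (i,j) * pv j" unfolding P_def using diag_entry_right[OF Xsc i j] .
  hence eq: "Xs $$ (i,j) - (Xs * T0) $$ (i,j) = Xs $$ (i,j) * (1 - pv j)" unfolding XT by (simp add: algebra_simps)
  show ?thesis
  proof (cases "j < l")
    case False
    have "0 \<le> N * Ks * (N * (K0 * b))" using N0 K00 bpos unfolding Ks_def by simp
    then show ?thesis unfolding eq using False by (simp add: pv_def)
  next
    case True
    have "Xs $$ (i,j) = (Xs * Q) $$ (i,j)" using XsQ by simp
    also have "\<dots> = (\<Sum>m<n. Xs $$ (i,m) * Q $$ (m,j))" by (rule mult_entry[OF Xsc Qc i j])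
    finally have "cmod (Xs $$ (i,j)) \<le> real n * Ks * (N * (K0 * b))"
      using ebD[OF ebXs] Qb'[OF _ j True] i by (auto intro!: sum_bound)
    then show ?thesis unfolding eq using True by (simp add: pv_def N_def)
  qed
qed


lemma QP_small: assumes i: "i < n" and m: "m < n" shows "cmod (Q $$ (i,m) - P $$ (i,m)) \<le> N * (K0 * b)"
proof (cases "i < l")
  case True
  have "P $$ (i,m) = 0" using P_entry[OF i m] True by (simp add: pv_def)
  then show ?thesis using Qb[OF i m True] by simp
next
  case False
  have "cmod (Q $$ (i,m) - P $$ (i,m)) = cmod ((if i = m then 1 else 0) - Q $$ (i,m))"
    using P_entry[OF i m] False by (simp add: pv_def norm_minus_commute)
  then show ?thesis using Qc1[OF i m] False by simp
qed

lemma term3: assumes i: "i < n" and j: "j < n"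
  shows "cmod ((T0 * Zs) $$ (i,j) - Zs $$ (i,j)) \<le> N * (N * (K0 * b)) * Ks"
proof -
  have TZ: "T0 * Zs = Q * Zs" unfolding T0_def using assoc_mult_mat[OF Qc Pc Zsc] PZs by simp
  have "(T0 * Zs) $$ (i,j) - Zs $$ (i,j) = (Q * Zs) $$ (i,j) - (P * Zs) $$ (i,j)" unfolding TZ PZs ..
  also have "\<dots> = (\<Sum>m<n. (Q $$ (i,m) - P $$ (i,m)) * Zs $$ (m,j))"
    unfolding mult_entry[OF Qc Zsc i j] mult_entry[OF Pc Zsc i j] by (simp add: sum_subtractf[symmetric] algebra_simps)
  finally have eq: "(T0 * Zs) $$ (i,j) - Zs $$ (i,j) = (\<Sum>m<n. (Q $$ (i,m) - P $$ (i,m)) * Zs $$ (m,j))" .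
  show ?thesis unfolding eq N_def[symmetric]
    using QP_small[OF i] ebD[OF ebZs] j unfolding N_def by (intro sum_bound) auto
qed

definition KE3 where "KE3 = N * (N * N * b) * (N * (K0 * b) ^ 2)"

lemma QZ0: assumes i: "i < n" and m: "m < n" and ml: "m < l" shows "(Q * Z) $$ (i,m) = 0"
  unfolding mult_entry[OF Qc Zc i m] using Z0'[OF _ m ml] by simp

lemma ebQZ: "eb n (Q * Z) (N * N * b)" using eb_mult[OF Qc Zc ebQ ebZ] unfolding N_def by simp

lemma E3: "eb n (X * T0 - T0 * Z) KE3"
  unfolding eb_def
proof (intro allI impI)
  fix i j assume i: "i < n" and j: "j < n"
  have QZc: "Q * Z \<in> carrier_mat n n" using Qc Zc by simp
  have XT: "X * T0 = X * P" unfolding T0_def using assoc_mult_mat[OF Xc Qc Pc, symmetric] XQ by simp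
  have TZ: "T0 * Z = Q * Z" unfolding T0_def using assoc_mult_mat[OF Qc Pc Zc] PZ by simp
  have ent: "(X * T0 - T0 * Z) $$ (i,j) = X $$ (i,j) * pv j - (Q * Z) $$ (i,j)"
  proof -
    have "(X * P - Q * Z) $$ (i,j) = (X * P) $$ (i,j) - (Q * Z) $$ (i,j)" by (rule minus_entry[OF QZc i j])
    also have "(X * P) $$ (i,j) = X $$ (i,j) * pv j" unfolding P_def by (rule diag_entry_right[OF Xc i j])
    finally show ?thesis unfolding XT TZ .
  qed
  have K0b: "0 \<le> KE3" unfolding KE3_def using N0 bpos by simp
  show "cmod ((X * T0 - T0 * Z) $$ (i,j)) \<le> KE3"
  proof (cases "j < l")
    case True
    then show ?thesis unfolding ent using QZ0[OF i j True] K0b by (simp add: pv_def)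
  next
    case False
    have "X $$ (i,j) = (\<Sum>m<n. (Q * Z) $$ (i,m) * Q $$ (m,j))" unfolding X_def by (rule mult_entry[OF QZc Qc i j])
    moreover have "(Q * Z) $$ (i,j) = (\<Sum>m<n. (Q * Z) $$ (i,m) * (if m = j then 1 else 0))"
      using j by (simp add: if_distrib cong: if_cong)
    ultimately have "X $$ (i,j) * pv j - (Q * Z) $$ (i,j) = (\<Sum>m<n. (Q * Z) $$ (i,m) * (Q $$ (m,j) - (if m = j then 1 else 0)))"
      using False by (simp add: pv_def sum_subtractf[symmetric] algebra_simps)
    also have "cmod \<dots> \<le> real n * ((N * N * b) * (N * (K0 * b) ^ 2))"
    proof (rule sum_bound2)
      fix m assume m: "m < n"
      show "cmod ((Q * Z) $$ (i,m) * (Q $$ (m,j) - (if m = j then 1 else 0))) \<le> (N * N * b) * (N * (K0 * b) ^ 2)"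
      proof (cases "m < l")
        case True then show ?thesis using QZ0[OF i m True] N0 bpos by simp
      next
        case False
        have "cmod (Q $$ (m,j) - (if m = j then 1 else 0)) \<le> N * (K0 * b) ^ 2"
          using Qc2[OF m j] False `\<not> j < l` by (simp add: norm_minus_commute)
        moreover have "cmod ((Q * Z) $$ (i,m)) \<le> N * N * b" using ebD[OF ebQZ i m] .
        ultimately show ?thesis unfolding norm_mult by (intro mult_mono) (use N0 bpos in auto)
      qed
    qed
    finally show ?thesis unfolding ent KE3_def N_def by (simp add: mult.assoc)
  qed
qed


lemma aUc: "mat_adjoint U \<in> carrier_mat n n" using Uc by simp
lemma aWc: "mat_adjoint W \<in> carrier_mat n n" using Wc by simp

lemma D1_eq: "Lambda n x * phi - phi * Lambda n y = mat_adjoint U * (X * T0 - T0 * Z) * W"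
proof -
  have a: "Lambda n x * phi = mat_adjoint U * (X * (T0 * W))"
  proof -
    have "Lambda n x * phi = (Lambda n x * mat_adjoint U) * (T0 * W)" unfolding phi_def using Uc T0c Wc by (simp add: assoc_dims)
    also have "Lambda n x * mat_adjoint U = mat_adjoint U * X" using spec_UA[OF U Xdec] by simp
    finally show ?thesis using Uc Xc T0c Wc by (simp add: assoc_dims)
  qed
  have b: "phi * Lambda n y = mat_adjoint U * (T0 * (Z * W))"
  proof -
    have "phi * Lambda n y = mat_adjoint U * (T0 * (W * Lambda n y))" unfolding phi_def using Uc T0c Wc by (simp add: assoc_dims)
    also have "W * Lambda n y = Z * W" using spec_AU[OF W Zdec] by simp
    finally show ?thesis .
  qed
  have XT: "X * T0 \<in> carrier_mat n n" and TZ: "T0 * Z \<in> carrier_mat n n" using Xc T0c Zc by auto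
  have "mat_adjoint U * (X * T0 - T0 * Z) * W = (mat_adjoint U * (X * T0) - mat_adjoint U * (T0 * Z)) * W"
    by (simp add: mult_minus_distrib_mat[OF aUc XT TZ])
  also have "\<dots> = mat_adjoint U * (X * T0) * W - mat_adjoint U * (T0 * Z) * W"
    by (rule minus_mult_distrib_mat[OF mult_carrier_mat[OF aUc XT] mult_carrier_mat[OF aUc TZ] Wc])
  also have "\<dots> = mat_adjoint U * (X * (T0 * W)) - mat_adjoint U * (T0 * (Z * W))"
    using Uc Xc T0c Zc Wc by (simp add: assoc_dims)
  finally show ?thesis unfolding a b by simp
qed

lemma D2_eq: "Xs * T0 - T0 * Zs = U * (Lambda n (\<lambda>i. x i powr s) * phi - phi * Lambda n (\<lambda>i. y i powr s)) * mat_adjoint W"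
proof -
  let ?Lx = "Lambda n (\<lambda>i. x i powr s)" and ?Ly = "Lambda n (\<lambda>i. y i powr s)"
  have WW: "W * mat_adjoint W = 1\<^sub>m n" using W unfolding unitary_mat_def by auto
  have UU: "U * mat_adjoint U = 1\<^sub>m n" using U unfolding unitary_mat_def by auto
  have a: "Xs * T0 = U * (?Lx * phi) * mat_adjoint W"
  proof -
    have "U * (?Lx * phi) * mat_adjoint W = U * (?Lx * (mat_adjoint U * (T0 * (W * mat_adjoint W))))"
      unfolding phi_def using Uc T0c Wc by (simp add: assoc_dims)
    also have "\<dots> = Xs * T0" unfolding WW Xs_def using Uc T0c by (simp add: assoc_dims right_mult_one_mat[OF T0c])
    finally show ?thesis by simp
  qed
  have b: "T0 * Zs = U * (phi * ?Ly) * mat_adjoint W"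
  proof -
    have "U * (phi * ?Ly) * mat_adjoint W = (U * mat_adjoint U) * (T0 * (W * (?Ly * mat_adjoint W)))"
      unfolding phi_def using Uc T0c Wc by (simp add: assoc_dims)
    also have "\<dots> = T0 * Zs" unfolding UU Zs_def using Wc T0c by (simp add: assoc_dims left_mult_one_mat[OF T0c])
    finally show ?thesis by simp
  qed
  have A1: "?Lx * phi \<in> carrier_mat n n" and A2: "phi * ?Ly \<in> carrier_mat n n" using phic by auto
  have "U * (?Lx * phi - phi * ?Ly) * mat_adjoint W = (U * (?Lx * phi) - U * (phi * ?Ly)) * mat_adjoint W"
    by (simp add: mult_minus_distrib_mat[OF Uc A1 A2])
  also have "\<dots> = U * (?Lx * phi) * mat_adjoint W - U * (phi * ?Ly) * mat_adjoint W"
    by (rule minus_mult_distrib_mat[OF mult_carrier_mat[OF Uc A1] mult_carrier_mat[OF Uc A2] aWc])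
  finally show ?thesis unfolding a b by simp
qed


definition Aphi where "Aphi = N * (N * 1 * (N * N * 1)) * 1 + 1"
definition DD where "DD = N * (N * 1 * KE3) * 1"

lemma ebT0: "eb n T0 (N * N * 1)" unfolding T0_def using eb_mult[OF Qc Pc ebQ ebP] unfolding N_def by simp
lemma ebphi: "eb n phi (N * (N * 1 * (N * N * 1)) * 1)"
proof -
  have "eb n (mat_adjoint U * T0) (N * 1 * (N * N * 1))"
    using eb_mult[OF aUc T0c eb_adj[OF Uc eb_unitary[OF U]] ebT0] unfolding N_def by simp
  from eb_mult[OF mult_carrier_mat[OF aUc T0c] Wc this eb_unitary[OF W]]
  show ?thesis unfolding phi_def N_def by simp
qed

lemma D1_entry: assumes k: "k < n" and m: "m < n"
  shows "cmod (complex_of_real (x k - y m) * phi $$ (k,m)) \<le> DD"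
proof -
  have Dc: "X * T0 - T0 * Z \<in> carrier_mat n n" using T0c Zc by (intro minus_carrier_mat) simp
  have e1: "eb n (mat_adjoint U * (X * T0 - T0 * Z)) (N * 1 * KE3)"
    using eb_mult[OF aUc Dc eb_adj[OF Uc eb_unitary[OF U]] E3] unfolding N_def by simp
  have e2: "eb n (mat_adjoint U * (X * T0 - T0 * Z) * W) DD"
    using eb_mult[OF mult_carrier_mat[OF aUc Dc] Wc e1 eb_unitary[OF W]] unfolding N_def DD_def by simp
  have pyc: "phi * Lambda n y \<in> carrier_mat n n" using phic by simp
  have "(Lambda n x * phi - phi * Lambda n y) $$ (k,m) = (Lambda n x * phi) $$ (k,m) - (phi * Lambda n y) $$ (k,m)"
    by (rule minus_entry[OF pyc k m])
  also have "\<dots> = complex_of_real (x k - y m) * phi $$ (k,m)"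
    unfolding diag_entry_left[OF phic k m] diag_entry_right[OF phic k m] by (simp add: algebra_simps)
  finally show ?thesis using ebD[OF e2 k m] unfolding D1_eq by simp
qed

lemma D2_bound: "eb n (Lambda n (\<lambda>i. x i powr s) * phi - phi * Lambda n (\<lambda>i. y i powr s)) (DD powr s * Aphi)"
  unfolding eb_def
proof (intro allI impI)
  fix k m assume k: "k < n" and m: "m < n"
  have pyc: "phi * Lambda n (\<lambda>i. y i powr s) \<in> carrier_mat n n" using phic by simp
  have "(Lambda n (\<lambda>i. x i powr s) * phi - phi * Lambda n (\<lambda>i. y i powr s)) $$ (k,m)
      = complex_of_real (x k powr s - y m powr s) * phi $$ (k,m)"
    unfolding minus_entry[OF pyc k m] diag_entry_left[OF phic k m] diag_entry_right[OF phic k m] by (simp add: algebra_simps)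
  hence eq: "cmod ((Lambda n (\<lambda>i. x i powr s) * phi - phi * Lambda n (\<lambda>i. y i powr s)) $$ (k,m))
      = \<bar>x k powr s - y m powr s\<bar> * cmod (phi $$ (k,m))" by (simp only: norm_mult norm_of_real)
  have A1: "1 \<le> Aphi" unfolding Aphi_def using N0 by simp
  have pa: "cmod (phi $$ (k,m)) \<le> Aphi" using ebD[OF ebphi k m] unfolding Aphi_def by simp
  have D: "\<bar>x k - y m\<bar> * cmod (phi $$ (k,m)) \<le> DD" using D1_entry[OF k m] by (simp only: norm_mult norm_of_real)
  show "cmod ((Lambda n (\<lambda>i. x i powr s) * phi - phi * Lambda n (\<lambda>i. y i powr s)) $$ (k,m)) \<le> DD powr s * Aphi"
    unfolding eq using xnn ynn k m spos s1 pa A1 D by (intro scalar_key) auto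
qed

lemma term2: assumes i: "i < n" and j: "j < n"
  shows "cmod ((Xs * T0) $$ (i,j) - (T0 * Zs) $$ (i,j)) \<le> N * (N * 1 * (DD powr s * Aphi)) * 1"
proof -
  let ?D = "Lambda n (\<lambda>i. x i powr s) * phi - phi * Lambda n (\<lambda>i. y i powr s)"
  have Dc: "?D \<in> carrier_mat n n" using phic by (intro minus_carrier_mat) simp
  have e1: "eb n (U * ?D) (N * 1 * (DD powr s * Aphi))"
    using eb_mult[OF Uc Dc eb_unitary[OF U] D2_bound] unfolding N_def by simp
  have e2: "eb n (U * ?D * mat_adjoint W) (N * (N * 1 * (DD powr s * Aphi)) * 1)"
    using eb_mult[OF mult_carrier_mat[OF Uc Dc] aWc e1 eb_adj[OF Wc eb_unitary[OF W]]] unfolding N_def by simp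
  have TZc: "T0 * Zs \<in> carrier_mat n n" using T0c Zsc by simp
  have "(Xs * T0) $$ (i,j) - (T0 * Zs) $$ (i,j) = (Xs * T0 - T0 * Zs) $$ (i,j)"
    by (rule minus_entry[OF TZc i j, symmetric])
  then show ?thesis using ebD[OF e2 i j] unfolding D2_eq by simp
qed

lemma tri3: "cmod ((u1::complex) - u4) \<le> cmod (u1 - u2) + cmod (u2 - u3) + cmod (u3 - u4)"
proof -
  have "u1 - u4 = (u1 - u2) + (u2 - u3) + (u3 - u4)" by simp
  then show ?thesis by (metis norm_triangle_ineq order_trans add_right_mono)
qed

lemma final_entry: "eb n (Xs - Zs) (N * Ks * (N * (K0 * b)) + N * (N * 1 * (DD powr s * Aphi)) * 1 + N * (N * (K0 * b)) * Ks)"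
  unfolding eb_def
proof (intro allI impI)
  fix i j assume i: "i < n" and j: "j < n"
  have "cmod ((Xs - Zs) $$ (i,j)) = cmod (Xs $$ (i,j) - Zs $$ (i,j))" unfolding minus_entry[OF Zsc i j] ..
  also have "\<dots> \<le> cmod (Xs $$ (i,j) - (Xs * T0) $$ (i,j)) + cmod ((Xs * T0) $$ (i,j) - (T0 * Zs) $$ (i,j))
      + cmod ((T0 * Zs) $$ (i,j) - Zs $$ (i,j))" by (rule tri3[of "Xs $$ (i,j)" "Zs $$ (i,j)" "(Xs * T0) $$ (i,j)" "(T0 * Zs) $$ (i,j)"])
  also have "\<dots> \<le> N * Ks * (N * (K0 * b)) + N * (N * 1 * (DD powr s * Aphi)) * 1 + N * (N * (K0 * b)) * Ks"
    by (rule add_mono[OF add_mono[OF term1[OF i j] term2[OF i j]] term3[OF i j]])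
  finally show "cmod ((Xs - Zs) $$ (i,j)) \<le> N * Ks * (N * (K0 * b)) + N * (N * 1 * (DD powr s * Aphi)) * 1 + N * (N * (K0 * b)) * Ks" .
qed

lemma final_bound: "mnorm n (Xs - Zs) \<le> Cfun n g s * b powr (min (1 + s) (3 * s))"
proof -
  let ?r = "min (1 + s) (3 * s)"
  have m: "mnorm n (Xs - Zs) \<le> N * (N * Ks * (N * (K0 * b)) + N * (N * 1 * (DD powr s * Aphi)) * 1 + N * (N * (K0 * b)) * Ks)"
    using eb_mnorm[OF final_entry] unfolding N_def by simp
  have b1': "b * b powr s \<le> b powr ?r"
  proof -
    have "b * b powr s = b powr (1 + s)" using bpos by (simp add: powr_add)
    also have "\<dots> \<le> b powr ?r" using bpos b1 by (intro powr_mono') auto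
    finally show ?thesis .
  qed
  have b3: "b powr (3 * s) \<le> b powr ?r" using bpos b1 by (intro powr_mono') auto
  have Ks_eq: "Ks = N ^ 2 * KX powr s * b powr s" unfolding Ks_def using KX0 bpos by (simp add: powr_mult)
  have DD1: "DD = (N ^ 6 * K0 ^ 2) * b ^ 3" unfolding DD_def KE3_def by (rule alg_a1)
  have "(b ^ 3) powr s = b powr (3 * s)"
  proof -
    have "b powr (3 * s) = (b powr 3) powr s" by (simp only: powr_powr)
    also have "b powr 3 = b ^ 3" using bpos by simp
    finally show ?thesis by simp
  qed
  hence DD_eq: "DD powr s = (N ^ 6 * K0 ^ 2) powr s * b powr (3 * s)" unfolding DD1 by (simp add: powr_mult)
  define A1 where "A1 = 2 * (N ^ 4 * K0 * KX powr s)"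
  define A2 where "A2 = N ^ 2 * (N ^ 4 + 1) * (N ^ 6 * K0 ^ 2) powr s"
  have t13: "N * Ks * (N * (K0 * b)) + N * (N * (K0 * b)) * Ks = A1 * (b * b powr s)"
    unfolding Ks_eq A1_def by (rule alg_a2)
  have t2: "N * (N * 1 * (DD powr s * Aphi)) * 1 = A2 * b powr (3 * s)"
    unfolding DD_eq Aphi_def A2_def by (rule alg_a3)
  have c1: "0 \<le> A1" unfolding A1_def using N0 K00 by simp
  have c2: "0 \<le> A2" unfolding A2_def using N0 by simp
  have "N * Ks * (N * (K0 * b)) + N * (N * 1 * (DD powr s * Aphi)) * 1 + N * (N * (K0 * b)) * Ks
      = A1 * (b * b powr s) + A2 * b powr (3 * s)"
    using t13 t2 by simp
  also have "\<dots> \<le> A1 * b powr ?r + A2 * b powr ?r"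
    by (intro add_mono mult_left_mono b1' b3 c1 c2)
  finally have "N * (N * Ks * (N * (K0 * b)) + N * (N * 1 * (DD powr s * Aphi)) * 1 + N * (N * (K0 * b)) * Ks)
      \<le> N * (A1 * b powr ?r + A2 * b powr ?r)"
    using N0 by (intro mult_left_mono) auto
  also have "\<dots> = (N * (A1 + A2)) * b powr ?r" by (simp add: algebra_simps)
  also have "N * (A1 + A2) = Cfun n g s" unfolding Cfun_def A1_def A2_def N_def K0_def KX_def ..
  finally show ?thesis using m by linarith
qed

end

context setting begin

lemma main_setting:
  "mnorm n (psd_power n s (Q * Z * Q) - psd_power n s Z) \<le> Cfun n g s * b powr (min (1 + s) (3 * s))"
proof -
  obtain U x where U: "unitary_mat n U" and xnn: "\<forall>i<n. 0 \<le> x i" and Xdec: "X = U * Lambda n x * mat_adjoint U"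
    and Xs: "psd_power n s X = U * Lambda n (\<lambda>i. x i powr s) * mat_adjoint U"
    using psd_power_spec[OF Xpsd, of s] by blast
  obtain W y where W: "unitary_mat n W" and ynn: "\<forall>i<n. 0 \<le> y i" and Zdec: "Z = W * Lambda n y * mat_adjoint W"
    and Zs: "psd_power n s Z = W * Lambda n (\<lambda>i. y i powr s) * mat_adjoint W"
    using psd_power_spec[OF Zp, of s] by blast
  interpret s2: setting2 n l bp c \<rho> g b s E Z V mu U W x y
    by unfold_locales (use U xnn Xdec W ynn Zdec in auto)
  have "mnorm n (s2.Xs - s2.Zs) \<le> Cfun n g s * b powr (min (1 + s) (3 * s))" by (rule s2.final_bound)
  then show ?thesis unfolding s2.Xs_def s2.Zs_def Xs[symmetric] Zs[symmetric] X_def .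
qed

end

theorem lemma3p3:
  fixes n l :: nat and p r :: real and ap :: "nat \<Rightarrow> real"
    and c :: complex and \<rho> :: real
  assumes "1 < p" and "p < 3" and "r = min (1 + 1/p) (3/p)"
    and "l \<le> n" and "\<forall>i<l. 0 < ap i"
    and "0 < \<rho>" and "cmod c < \<rho>" and "\<forall>i<l. \<rho> < cmod (complex_of_real (ap i) - c)"
  shows "\<exists>\<delta>>0. \<exists>C. \<exists>b0>0. \<forall>bp :: nat \<Rightarrow> real.
     (\<forall>i<l. \<bar>bp i - ap i\<bar> < \<delta>) \<longrightarrow>
     (let \<alpha> = (\<lambda>i. if i < l then bp i else 0) in
      \<forall>E Z b. hermitian_mat n E \<longrightarrow> psd_mat n Z
        \<longrightarrow> (\<forall>v \<in> carrier_vec n. Lambda n \<alpha> *\<^sub>v (Z *\<^sub>v v) = 0\<^sub>v n)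
        \<longrightarrow> (\<forall>z \<in> sphere c \<rho>. \<not> eigenvalue (Lambda n \<alpha> + E) z)
        \<longrightarrow> 0 < b \<longrightarrow> b \<le> b0 \<longrightarrow> mnorm n E \<le> b \<longrightarrow> mnorm n Z \<le> b
        \<longrightarrow> mnorm n (psd_power n (1/p)
                       (riesz_proj n c \<rho> (Lambda n \<alpha> + E) * Z * riesz_proj n c \<rho> (Lambda n \<alpha> + E))
                     - psd_power n (1/p) Z) \<le> C * b powr r)"
proof -
  define S where "S = insert 1 ((\<lambda>i. cmod (complex_of_real (ap i) - c) - \<rho>) ` {..<l})"
  define g1 where "g1 = Min S"
  have Sf: "finite S" and Sne: "S \<noteq> {}" unfolding S_def by auto
  have g1pos: "0 < g1" unfolding g1_def using Min_gr_iff[OF Sf Sne] assms(8) unfolding S_def by auto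
  have g1le: "\<rho> + g1 \<le> cmod (complex_of_real (ap i) - c)" if i: "i < l" for i
  proof -
    have "g1 \<le> cmod (complex_of_real (ap i) - c) - \<rho>" unfolding g1_def using i by (intro Min_le[OF Sf]) (auto simp: S_def)
    then show ?thesis by simp
  qed
  define g where "g = min (g1 / 2) (\<rho> - cmod c)"
  have gpos: "0 < g" unfolding g_def using g1pos assms(7) by simp
  define s where "s = 1 / p"
  have spos: "0 < s" and s1: "s \<le> 1" unfolding s_def using assms(1) by auto
  have r: "r = min (1 + s) (3 * s)" unfolding s_def assms(3) by simp
  have key: "\<forall>bp :: nat \<Rightarrow> real.
     (\<forall>i<l. \<bar>bp i - ap i\<bar> < g1 / 2) \<longrightarrow>
     (let \<alpha> = (\<lambda>i. if i < l then bp i else 0) in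
      \<forall>E Z b. hermitian_mat n E \<longrightarrow> psd_mat n Z
        \<longrightarrow> (\<forall>v \<in> carrier_vec n. Lambda n \<alpha> *\<^sub>v (Z *\<^sub>v v) = 0\<^sub>v n)
        \<longrightarrow> (\<forall>z \<in> sphere c \<rho>. \<not> eigenvalue (Lambda n \<alpha> + E) z)
        \<longrightarrow> 0 < b \<longrightarrow> b \<le> 1 \<longrightarrow> mnorm n E \<le> b \<longrightarrow> mnorm n Z \<le> b
        \<longrightarrow> mnorm n (psd_power n (1/p)
                       (riesz_proj n c \<rho> (Lambda n \<alpha> + E) * Z * riesz_proj n c \<rho> (Lambda n \<alpha> + E))
                     - psd_power n (1/p) Z) \<le> Cfun n g s * b powr r)"
  proof (intro allI impI)
    fix bp :: "nat \<Rightarrow> real"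
    assume bp: "\<forall>i<l. \<bar>bp i - ap i\<bar> < g1 / 2"
    have gap1: "\<forall>i<l. \<rho> + g \<le> cmod (complex_of_real (bp i) - c)"
    proof (intro allI impI)
      fix i assume i: "i < l"
      have "cmod (complex_of_real (ap i) - c) \<le> cmod (complex_of_real (ap i) - complex_of_real (bp i)) + cmod (complex_of_real (bp i) - c)"
        by (rule order_trans[OF _ norm_triangle_ineq]) simp
      also have "cmod (complex_of_real (ap i) - complex_of_real (bp i)) = \<bar>ap i - bp i\<bar>"
        by (metis norm_of_real of_real_diff)
      finally have "cmod (complex_of_real (ap i) - c) \<le> \<bar>ap i - bp i\<bar> + cmod (complex_of_real (bp i) - c)" .
      moreover have "\<bar>ap i - bp i\<bar> < g1 / 2" using bp i by (simp add: abs_minus_commute)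
      moreover have "g \<le> g1 / 2" unfolding g_def by (rule min.cobounded1)
      ultimately show "\<rho> + g \<le> cmod (complex_of_real (bp i) - c)" using g1le[OF i] by linarith
    qed
    have gap2: "g \<le> \<rho> - cmod c" unfolding g_def by simp
    show "let \<alpha> = (\<lambda>i. if i < l then bp i else 0) in
      \<forall>E Z b. hermitian_mat n E \<longrightarrow> psd_mat n Z
        \<longrightarrow> (\<forall>v \<in> carrier_vec n. Lambda n \<alpha> *\<^sub>v (Z *\<^sub>v v) = 0\<^sub>v n)
        \<longrightarrow> (\<forall>z \<in> sphere c \<rho>. \<not> eigenvalue (Lambda n \<alpha> + E) z)
        \<longrightarrow> 0 < b \<longrightarrow> b \<le> 1 \<longrightarrow> mnorm n E \<le> b \<longrightarrow> mnorm n Z \<le> b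
        \<longrightarrow> mnorm n (psd_power n (1/p)
                       (riesz_proj n c \<rho> (Lambda n \<alpha> + E) * Z * riesz_proj n c \<rho> (Lambda n \<alpha> + E))
                     - psd_power n (1/p) Z) \<le> Cfun n g s * b powr r"
      unfolding Let_def
    proof (intro allI impI)
      fix E Z :: cmat and b :: real
      let ?al = "\<lambda>i. if i < l then bp i else 0"
      assume Eh: "hermitian_mat n E" and Zp: "psd_mat n Z"
        and ZK: "\<forall>v \<in> carrier_vec n. Lambda n ?al *\<^sub>v (Z *\<^sub>v v) = 0\<^sub>v n"
        and noeig: "\<forall>z \<in> sphere c \<rho>. \<not> eigenvalue (Lambda n ?al + E) z"
        and bpos: "0 < b" and b1: "b \<le> 1" and Eb: "mnorm n E \<le> b" and Zb: "mnorm n Z \<le> b"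
      have Ec: "E \<in> carrier_mat n n" using Eh unfolding hermitian_mat_def by auto
      have Lh: "mat_adjoint (Lambda n ?al) = Lambda n ?al"
        by (rule eq_matI) (auto simp: Lambda_index)
      have Mh: "hermitian_mat n (Lambda n ?al + E)"
        unfolding hermitian_mat_def using Ec adj_add[OF Lambda_carrier Ec] Lh Eh
        unfolding hermitian_mat_def by simp
      obtain V mu where V: "unitary_mat n V" and Mdec: "Lambda n ?al + E = V * Lambda n mu * mat_adjoint V"
        using spectral[OF Mh] by blast
      interpret st: setting n l bp c \<rho> g b s E Z V mu
        by unfold_locales (use gap1 gap2 gpos assms(6) Eh Zp ZK noeig bpos b1 Eb Zb spos s1 V Mdec in auto)
      have "mnorm n (psd_power n s (st.Q * Z * st.Q) - psd_power n s Z) \<le> Cfun n g s * b powr r"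
        using st.main_setting unfolding r .
      then show "mnorm n (psd_power n (1/p)
                       (riesz_proj n c \<rho> (Lambda n ?al + E) * Z * riesz_proj n c \<rho> (Lambda n ?al + E))
                     - psd_power n (1/p) Z) \<le> Cfun n g s * b powr r"
        unfolding st.Q_def st.M_def st.al_def s_def .
    qed
  qed
  have g2: "0 < g1 / 2" using g1pos by simp
  show ?thesis
    apply (rule exI[of _ "g1 / 2"], rule conjI[OF g2])
    apply (rule exI[of _ "Cfun n g s"], rule exI[of _ 1], rule conjI, simp)
    using key by simp
qed


end
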